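(* Let $n\ge 1$ and $\Omega_n=\{E\in\mathbb C:\operatorname{Re}(E)<nm+\mu_P\}$. For every $E\in\Omega_n$ the operators $\tilde K(E)$ and $\tilde U(E)$ are bounded on $\mathcal F^{(n)}$. Moreover there is a constant $C>0$, independent of $E$, $n$ and $\lambda$, such that $$\|\tilde U(E)\|\le \frac{C\,\lambda^2 n}{(n-1)m+\mu_P-\operatorname{Re}(E)}$$ for all $E$ with $\operatorname{Re}(E)<(n-1)m+\mu_P$, and both $\|\tilde K(E)\|\to 0$ and $\|\tilde U(E)\|\to0$ as $E\to-\infty$ along the real axis.
   Context: Light-front Lee model in 2+1 dimensions. Fix $m>0$, a coupling constant $\lambda>0$ and a physical binding energy $\mu_P$ with $0<\mu_P<m$. Let $\mathfrak h=L^2\big((0,\infty)\times\mathbb R,\tfrac{dp\,dp_\perp}{(2\pi)^2}\big)$, let $\mathcal F^{(n)}$ denote the $n$-boson (symmetric) subspace of the bosonic Fock space over $\mathfrak h$, and let $a(p,p_\perp),a^\dagger(p,p_\perp)$ be the annihilation/creation operator-valued distributions with $[a(p,p_\perp),a^\dagger(q,q_\perp)]=(2\pi)^2\delta(p-q)\delta(p_\perp-q_\perp)$. Put $\omega(p,p_\perp)=\frac{m^2+p^2+p_\perp^2}{2p}$ (note $\omega\ge m$), and $H_0=\int_0^\infty\!\!\int_{\mathbb R}\frac{dp\,dp_\perp}{(2\pi)^2}\,\omega(p,p_\perp)a^\dagger(p,p_\perp)a(p,p_\perp)$, the free (second quantized) Hamiltonian, self-adjoint on its domain $D(H_0)$;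 on $\mathcal F^{(n)}$ one has $H_0\ge nm$. For complex $E$ define, on $\mathcal F^{(n)}$, $$\tilde K(E)=\lambda^2\int_0^\infty\!\!\int_{\mathbb R}\frac{dp\,dp_\perp}{(2\pi)^2}\,\frac{1}{2p}\,\frac{1}{(\omega(p,p_\perp)-\mu_P)\,(H_0-E+\omega(p,p_\perp))}$$ (a function of $H_0$ via the spectral calculus), $$V(E)=\lambda^2\int\!\!\int\frac{dp\,dp_\perp}{(2\pi)^2}\frac{dq\,dq_\perp}{(2\pi)^2}\,\frac{1}{2\sqrt{pq}}\,a^\dagger(q,q_\perp)\,\big(H_0-E+\omega(p,p_\perp)+\omega(q,q_\perp)\big)^{-1}a(p,p_\perp),$$ and $\tilde U(E)=V(E)\,(H_0-E+\mu_P)^{-1}$. The (renormalized) principal operator is $\Phi(E)=(H_0-E+\mu_P)\big[1+\tilde K(E)\big]-V(E)=\big[1+\tilde K(E)-\tilde U(E)\big](H_0-E+\mu_P)$, acting in $\mathcal F^{(n)}$. *)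

theory Defs
  imports "HOL-Probability.Probability"
begin

text \<open>Light-front Lee model in 2+1 dimensions, n-boson sector realised concretely:
  one-boson momenta are points (p, p_perp) of real x real with p > 0, measure
  dp dp_perp / (2 pi)^2; the n-boson sector consists of symmetric square-integrable
  complex functions of n momenta (indexed by {..<n}).\<close>

definition omega :: "real \<Rightarrow> real \<times> real \<Rightarrow> real" where
  "omega m p = (m^2 + (fst p)^2 + (snd p)^2) / (2 * fst p)"

definition mom_measure :: "(real \<times> real) measure" where
  "mom_measure = density lborel
     (\<lambda>p. ennreal (indicator {q. 0 < fst q} p / (2 * pi)^2))"

definition fock_measure :: "nat \<Rightarrow> (nat \<Rightarrow> real \<times> real) measure" where
  "fock_measure n = PiM {..<n} (\<lambda>_. mom_measure)"

definition Hn :: "real \<Rightarrow> nat \<Rightarrow> (nat \<Rightarrow> real \<times> real) \<Rightarrow> real" where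
  "Hn m n k = (\<Sum>i<n. omega m (k i))"

definition symmetric_fn :: "nat \<Rightarrow> ((nat \<Rightarrow> real \<times> real) \<Rightarrow> complex) \<Rightarrow> bool" where
  "symmetric_fn n \<psi> \<longleftrightarrow>
     (\<forall>\<pi>. \<pi> permutes {..<n} \<longrightarrow> (\<forall>k \<in> space (fock_measure n). \<psi> (k \<circ> \<pi>) = \<psi> k))"

definition l2norm :: "nat \<Rightarrow> ((nat \<Rightarrow> real \<times> real) \<Rightarrow> complex) \<Rightarrow> real" where
  "l2norm n \<psi> = sqrt (\<integral>k. (cmod (\<psi> k))^2 \<partial>fock_measure n)"

text \<open>The n-boson sector F^(n) (representatives of its elements).\<close>
definition fock_sector :: "nat \<Rightarrow> ((nat \<Rightarrow> real \<times> real) \<Rightarrow> complex) set" where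
  "fock_sector n = {\<psi>. \<psi> \<in> borel_measurable (fock_measure n)
       \<and> integrable (fock_measure n) (\<lambda>k. (cmod (\<psi> k))^2)
       \<and> symmetric_fn n \<psi>}"

definition bounded_op ::
  "nat \<Rightarrow> (((nat \<Rightarrow> real \<times> real) \<Rightarrow> complex) \<Rightarrow> ((nat \<Rightarrow> real \<times> real) \<Rightarrow> complex)) \<Rightarrow> bool" where
  "bounded_op n T \<longleftrightarrow> (\<exists>c. \<forall>\<psi> \<in> fock_sector n.
       T \<psi> \<in> fock_sector n \<and> l2norm n (T \<psi>) \<le> c * l2norm n \<psi>)"

definition op_norm ::
  "nat \<Rightarrow> (((nat \<Rightarrow> real \<times> real) \<Rightarrow> complex) \<Rightarrow> ((nat \<Rightarrow> real \<times> real) \<Rightarrow> complex)) \<Rightarrow> real" where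
  "op_norm n T = Sup {l2norm n (T \<psi>) | \<psi>. \<psi> \<in> fock_sector n \<and> l2norm n \<psi> \<le> 1}"

definition K_integrand ::
  "real \<Rightarrow> real \<Rightarrow> complex \<Rightarrow> nat \<Rightarrow> (nat \<Rightarrow> real \<times> real) \<Rightarrow> real \<times> real \<Rightarrow> complex" where
  "K_integrand m \<mu>P E n k p =
     complex_of_real (1 / (2 * fst p)) /
       (complex_of_real (omega m p - \<mu>P) * (complex_of_real (Hn m n k + omega m p) - E))"

definition Ktilde ::
  "real \<Rightarrow> real \<Rightarrow> real \<Rightarrow> complex \<Rightarrow> nat \<Rightarrow>
     ((nat \<Rightarrow> real \<times> real) \<Rightarrow> complex) \<Rightarrow> ((nat \<Rightarrow> real \<times> real) \<Rightarrow> complex)" where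
  "Ktilde m \<mu>P lam E n \<psi> k =
     complex_of_real (lam^2) * (\<integral>p. K_integrand m \<mu>P E n k p \<partial>mom_measure) * \<psi> k"

text \<open>U~(E) = V(E) (H_0 - E + mu_P)^{-1}.  On a symmetric n-boson wave function,
  (V(E) phi)(k) = lam^2 sum_j int dp/(2pi)^2 (2 sqrt(p k_j))^{-1}
      (H_0(k with k_j replaced by p) + omega(k_j) - E)^{-1} phi(k with k_j replaced by p),
  and phi = psi / (H_0 - E + mu_P).\<close>
definition U_integrand ::
  "real \<Rightarrow> real \<Rightarrow> complex \<Rightarrow> nat \<Rightarrow> ((nat \<Rightarrow> real \<times> real) \<Rightarrow> complex) \<Rightarrow>
     (nat \<Rightarrow> real \<times> real) \<Rightarrow> nat \<Rightarrow> real \<times> real \<Rightarrow> complex" where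
  "U_integrand m \<mu>P E n \<psi> k j p =
     complex_of_real (1 / (2 * sqrt (fst p * fst (k j)))) /
       (complex_of_real (Hn m n (k(j := p)) + omega m (k j)) - E)
     * (\<psi> (k(j := p)) / (complex_of_real (Hn m n (k(j := p)) + \<mu>P) - E))"

definition Utilde ::
  "real \<Rightarrow> real \<Rightarrow> real \<Rightarrow> complex \<Rightarrow> nat \<Rightarrow>
     ((nat \<Rightarrow> real \<times> real) \<Rightarrow> complex) \<Rightarrow> ((nat \<Rightarrow> real \<times> real) \<Rightarrow> complex)" where
  "Utilde m \<mu>P lam E n \<psi> k =
     complex_of_real (lam^2) * (\<Sum>j<n. \<integral>p. U_integrand m \<mu>P E n \<psi> k j p \<partial>mom_measure)"

end

theory Submission
  imports Defs
begin



lemma omega_meas[measurable]: "omega m \<in> borel_measurable (borel \<Otimes>\<^sub>M borel)"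
  unfolding omega_def by measurable

lemma sets_mom[simp, measurable_cong]: "sets mom_measure = sets (borel \<Otimes>\<^sub>M borel)"
  by (simp only: mom_measure_def sets_density sets_lborel borel_prod)

lemma space_mom[simp]: "space mom_measure = UNIV"
  unfolding mom_measure_def by simp

lemma dens_meas: "(\<lambda>p::real\<times>real. ennreal (indicator {q. 0 < fst q} p / (2 * pi)^2)) \<in> borel_measurable borel"
proof -
  have "(\<lambda>p::real\<times>real. ennreal (indicator {q. 0 < fst q} p / (2 * pi)^2)) \<in> borel_measurable (borel \<Otimes>\<^sub>M borel)"
    by measurable
  then show ?thesis by (simp only: borel_prod)
qed

lemma dens_real[measurable]: "(\<lambda>p::real\<times>real. indicator {q. 0 < fst q} p / (2 * pi)^2 :: real) \<in> borel_measurable borel"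
proof -
  have "(\<lambda>p::real\<times>real. indicator {q. 0 < fst q} p / (2 * pi)^2 :: real) \<in> borel_measurable (borel \<Otimes>\<^sub>M borel)"
    by measurable
  then show ?thesis by (simp only: borel_prod)
qed

lemma dens_real'[measurable]: "(\<lambda>p::real\<times>real. of_bool (0 < fst p) / (4 * pi^2) :: real) \<in> borel_measurable borel"
  using dens_real by (simp add: indicator_def of_bool_def power_mult_distrib)

lemma dens_real''[measurable]: "(\<lambda>p::real\<times>real. indicator {q. 0 < fst q} p / (4 * pi^2) :: real) \<in> borel_measurable borel"
  using dens_real by (simp add: power_mult_distrib)

lemma dens_meas': "(\<lambda>p::real\<times>real. ennreal (indicator {q. 0 < fst q} p / (2 * pi)^2)) \<in> borel_measurable lborel"
  using dens_meas by simp

lemma mom_sigma_finite: "sigma_finite_measure mom_measure"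
  unfolding mom_measure_def
  using sigma_finite_measure.sigma_finite_iff_density_finite'[OF sigma_finite_lborel dens_meas'] by simp

interpretation mom: sigma_finite_measure mom_measure by (rule mom_sigma_finite)

interpretation fp: product_sigma_finite "\<lambda>_. mom_measure"
  by unfold_locales

lemma nn_mom: "f \<in> borel_measurable borel \<Longrightarrow>
  (\<integral>\<^sup>+p. f p \<partial>mom_measure) = (\<integral>\<^sup>+p. ennreal (indicator {q. 0 < fst q} p / (2 * pi)^2) * f p \<partial>lborel)"
  unfolding mom_measure_def by (subst nn_integral_density) (auto simp: dens_meas dens_real'')

lemma AE_mom_pos: "AE p in mom_measure. 0 < fst p"
  unfolding mom_measure_def
  by (subst AE_density) (auto simp: indicator_def dens_meas)

lemma omega_ge: assumes "0 < m" "0 < fst p" shows "m \<le> omega m p"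
proof -
  have "2 * fst p * m \<le> m^2 + (fst p)^2 + (snd p)^2"
  proof -
    have "m^2 + (fst p)^2 + (snd p)^2 - 2*fst p*m = (fst p - m)^2 + (snd p)^2"
      by (simp add: power2_eq_square algebra_simps)
    moreover have "0 \<le> (fst p - m)^2" "0 \<le> (snd p)^2" by simp_all
    ultimately show ?thesis by linarith
  qed
  then show ?thesis using assms unfolding omega_def by (simp add: field_simps)
qed



lemma nn_FTC:
  fixes f F :: "real \<Rightarrow> real" and a b :: ereal
  assumes "a < b"
  assumes F: "\<And>x. a < ereal x \<Longrightarrow> ereal x < b \<Longrightarrow> DERIV F x :> f x"
  assumes f: "\<And>x. a < ereal x \<Longrightarrow> ereal x < b \<Longrightarrow> isCont f x"
  assumes f_nonneg: "\<And>x. a < ereal x \<Longrightarrow> ereal x < b \<Longrightarrow> 0 \<le> f x"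
  assumes A: "((F \<circ> real_of_ereal) \<longlongrightarrow> A) (at_right a)"
  assumes B: "((F \<circ> real_of_ereal) \<longlongrightarrow> B) (at_left b)"
  shows "(\<integral>\<^sup>+x. ennreal (indicator (einterval a b) x * f x) \<partial>lborel) = ennreal (B - A)"
proof -
  have fn: "AE x in lborel. a < ereal x \<longrightarrow> ereal x < b \<longrightarrow> 0 \<le> f x" using f_nonneg by auto
  note r = interval_integral_FTC_nonneg[OF assms(1) F f fn A B]
  have int: "integrable lborel (\<lambda>x. indicator (einterval a b) x * f x)"
    using r(1) by (simp add: set_integrable_def)
  have "(\<integral>\<^sup>+x. ennreal (indicator (einterval a b) x * f x) \<partial>lborel) = ennreal (integral\<^sup>L lborel (\<lambda>x. indicator (einterval a b) x * f x))"
    by (rule nn_integral_eq_integral[OF int]) (auto simp: indicator_def einterval_iff intro!: f_nonneg)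
  also have "set_lebesgue_integral lborel (einterval a b) f = B - A"
    using r(2) less_imp_le[OF assms(1)] by (simp add: interval_lebesgue_integral_def)
  then have "integral\<^sup>L lborel (\<lambda>x. indicator (einterval a b) x * f x) = B - A"
    unfolding set_lebesgue_integral_def by simp
  finally show ?thesis .
qed

lemma alg1:
  fixes B x s r :: real
  assumes "0 < s" "0 < r" "s * s = B + x^2" "r * r = B" "0 < B"
  shows "(B * r * s - x * (inverse s * x * (B * r))) / (B * r * s * (B * r * s)) = 1 / (r * ((B + x^2) * s))"
proof -
  have "B * r * s - x * (inverse s * x * (B * r)) = B * r * (s * s - x^2) / s"
    using assms by (simp add: field_simps power2_eq_square)
  also have "\<dots> = B * r * B / s" using assms by simp
  finally have e: "B * r * s - x * (inverse s * x * (B * r)) = B * r * B / s" .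
  have "B * r * B / s / (B * r * s * (B * r * s)) = 1 / (r * ((s * s) * s))"
    using assms(1,2,5) by (simp add: field_simps)
  then show ?thesis unfolding e assms(3) .
qed

lemma lim_top: assumes "0 < (B::real)" shows "((\<lambda>x. x / (B * sqrt B * sqrt (B + x^2))) \<longlongrightarrow> 1/(B * sqrt B)) at_top"
proof -
  have "((\<lambda>x. 1 / (B * sqrt B) * inverse (sqrt (1 + B * (inverse x)^2))) \<longlongrightarrow> 1/(B * sqrt B) * inverse (sqrt (1 + B * 0^2))) at_top"
    by (intro tendsto_intros tendsto_inverse_0_at_top filterlim_ident) auto
  then have l: "((\<lambda>x. 1 / (B * sqrt B) * inverse (sqrt (1 + B * (inverse x)^2))) \<longlongrightarrow> 1/(B * sqrt B)) at_top" by simp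
  show ?thesis
  proof (rule Lim_transform_eventually[OF l])
    show "\<forall>\<^sub>F x in at_top. 1 / (B * sqrt B) * inverse (sqrt (1 + B * (inverse x)^2)) = x / (B * sqrt B * sqrt (B + x^2))"
      using eventually_gt_at_top[of 0]
    proof eventually_elim
      case (elim x)
      have "1 + B * (inverse x)^2 = (B + x^2) / x^2"
        using elim by (simp add: field_simps)
      then have "sqrt (1 + B * (inverse x)^2) = sqrt (B + x^2) / sqrt (x^2)"
        by (simp add: real_sqrt_divide)
      also have "sqrt (x^2) = x" using elim by simp
      finally have eq: "sqrt (1 + B * (inverse x)^2) = sqrt (B + x^2) / x" .
      show ?case unfolding eq inverse_divide by simp
    qed
  qed
qed

lemma lim_bot: assumes "0 < (B::real)" shows "((\<lambda>x. x / (B * sqrt B * sqrt (B + x^2))) \<longlongrightarrow> -1/(B * sqrt B)) at_bot"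
  unfolding filterlim_at_bot_mirror using tendsto_minus[OF lim_top[OF assms]] by simp

lemma I1_nn:
  fixes B :: real assumes B: "0 < B"
  shows "(\<integral>\<^sup>+x. ennreal (1 / (B + x^2)^2) \<partial>lborel) \<le> ennreal (2 / (B * sqrt B))"
proof -
  define h where "h x = 1 / (sqrt B * ((B + x^2) * sqrt (B + x^2)))" for x
  define F where "F x = x / (B * sqrt B * sqrt (B + x^2))" for x
  have pos: "0 < B + x^2" for x using B by (simp add: add_pos_nonneg)
  have le: "1 / (B + x^2)^2 \<le> h x" for x
  proof -
    have "sqrt B * sqrt (B + x^2) \<le> sqrt (B + x^2) * sqrt (B + x^2)"
      using pos[of x] by (intro mult_right_mono) auto
    also have "\<dots> = B + x^2" using pos[of x] by simp
    finally have "sqrt B * ((B + x^2) * sqrt (B + x^2)) \<le> (B + x^2) * (B + x^2)"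
      using pos[of x] by (simp add: mult.left_commute mult_left_mono)
    moreover have "0 < sqrt B * ((B + x^2) * sqrt (B + x^2))" using pos[of x] B by simp
    ultimately show ?thesis unfolding h_def power2_eq_square[of "B + x^2"]
      by (intro divide_left_mono) auto
  qed
  have deriv: "DERIV F x :> h x" for x
    unfolding F_def h_def using pos[of x] B
    apply (auto intro!: derivative_eq_intros)
    apply (rule alg1) using pos[of x] B by auto
  have eq: "(\<integral>\<^sup>+x. ennreal (indicator (einterval (-\<infinity>) \<infinity>) x * h x) \<partial>lborel) = ennreal (1/(B * sqrt B) - (-1/(B * sqrt B)))"
  proof (rule nn_FTC)
    show "DERIV F x :> h x" for x by (rule deriv)
    show "isCont h x" for x unfolding h_def using pos[of x] B by (auto intro!: continuous_intros)
    show "0 \<le> h x" for x unfolding h_def using pos[of x] B by auto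
    show "((F \<circ> real_of_ereal) \<longlongrightarrow> -1/(B * sqrt B)) (at_right (-\<infinity>))"
      unfolding ereal_tendsto_simps1 F_def using lim_bot[OF B] .
    show "((F \<circ> real_of_ereal) \<longlongrightarrow> 1/(B * sqrt B)) (at_left \<infinity>)"
      unfolding ereal_tendsto_simps1 F_def using lim_top[OF B] .
  qed simp
  have "(\<integral>\<^sup>+x. ennreal (1 / (B + x^2)^2) \<partial>lborel) \<le> (\<integral>\<^sup>+x. ennreal (indicator (einterval (-\<infinity>) \<infinity>) x * h x) \<partial>lborel)"
    by (intro nn_integral_mono) (simp add: le ennreal_leI)
  also have "\<dots> = ennreal (2 / (B * sqrt B))" unfolding eq by simp
  finally show ?thesis .
qed



lemma alg2:
  fixes a p u v :: real
  assumes "0 < u" "0 < v" "u * u = p" "v * v = p + a" "0 < a"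
  shows "(inverse u * (a * v) - u * (inverse v * a)) / (a * v * (a * v)) = 1 / (u * ((p + a) * v))"
proof -
  have "inverse u * (a * v) - u * (inverse v * a) = a * (v * v - u * u) / (u * v)"
    using assms(1,2) by (simp add: field_simps)
  also have "\<dots> = a * a / (u * v)" using assms(3,4) by simp
  finally have e: "inverse u * (a * v) - u * (inverse v * a) = a * a / (u * v)" .
  have "a * a / (u * v) / (a * v * (a * v)) = 1 / (u * ((v * v) * v))"
    using assms(1,2,5) by (simp add: field_simps)
  then show ?thesis unfolding e assms(4) .
qed

lemma lim_top2: assumes "0 < (a::real)" shows "((\<lambda>x. 2 * sqrt x / (a * sqrt (x + a))) \<longlongrightarrow> 2/a) at_top"
proof -
  have "((\<lambda>x. 2 / a * inverse (sqrt (1 + a * inverse x))) \<longlongrightarrow> 2/a * inverse (sqrt (1 + a * 0))) at_top"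
    by (intro tendsto_intros tendsto_inverse_0_at_top filterlim_ident) auto
  then have l: "((\<lambda>x. 2 / a * inverse (sqrt (1 + a * inverse x))) \<longlongrightarrow> 2/a) at_top" by simp
  show ?thesis
  proof (rule Lim_transform_eventually[OF l])
    show "\<forall>\<^sub>F x in at_top. 2 / a * inverse (sqrt (1 + a * inverse x)) = 2 * sqrt x / (a * sqrt (x + a))"
      using eventually_gt_at_top[of 0]
    proof eventually_elim
      case (elim x)
      have "1 + a * inverse x = (x + a) / x"
        using elim by (simp add: field_simps)
      then have eq: "sqrt (1 + a * inverse x) = sqrt (x + a) / sqrt x"
        by (simp add: real_sqrt_divide)
      show ?case unfolding eq inverse_divide by simp
    qed
  qed
qed

lemma I2_nn:
  fixes a :: real assumes a: "0 < a"
  shows "(\<integral>\<^sup>+x. ennreal (indicator {0<..} x * (1 / (sqrt x * ((x + a) * sqrt (x + a))))) \<partial>lborel) = ennreal (2 / a)"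
proof -
  define h where "h x = 1 / (sqrt x * ((x + a) * sqrt (x + a)))" for x
  define F where "F x = 2 * sqrt x / (a * sqrt (x + a))" for x
  have ei: "einterval 0 \<infinity> = {0<..}" by (auto simp: einterval_iff zero_ereal_def)
  have deriv: "0 < x \<Longrightarrow> DERIV F x :> h x" for x
    unfolding F_def h_def using a
    apply (auto intro!: derivative_eq_intros)
    apply (rule alg2) using a by auto
  have eq: "(\<integral>\<^sup>+x. ennreal (indicator (einterval 0 \<infinity>) x * h x) \<partial>lborel) = ennreal (2 / a - 0)"
  proof (rule nn_FTC)
    show "0 < ereal x \<Longrightarrow> DERIV F x :> h x" for x using deriv by (simp add: zero_ereal_def)
    show "0 < ereal x \<Longrightarrow> isCont h x" for x unfolding h_def using a
      by (auto intro!: continuous_intros simp: zero_ereal_def)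
    show "0 < ereal x \<Longrightarrow> 0 \<le> h x" for x unfolding h_def using a by (auto simp: zero_ereal_def)
    have "(F \<longlongrightarrow> F 0) (at 0)" unfolding F_def using a by (intro tendsto_intros) auto
    then have "(F \<longlongrightarrow> 0) (at_right 0)" unfolding F_def by (auto intro: tendsto_mono[OF at_within_le_at])
    then show "((F \<circ> real_of_ereal) \<longlongrightarrow> 0) (at_right 0)"
      unfolding zero_ereal_def ereal_tendsto_simps1 by simp
    show "((F \<circ> real_of_ereal) \<longlongrightarrow> 2 / a) (at_left \<infinity>)"
      unfolding ereal_tendsto_simps1 F_def using lim_top2[OF a] .
  qed simp
  then show ?thesis unfolding ei h_def by simp
qed



lemma g_eq: fixes x d m y :: real assumes "0 < x" "0 \<le> d"
  shows "1 / (2 * x * ((m^2 + x^2 + y^2) / (2 * x) + d)^2) = 2 * x / ((m^2 + x^2 + 2*x*d) + y^2)^2"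
proof -
  have "(m^2 + x^2 + y^2) / (2 * x) + d = ((m^2 + x^2 + 2*x*d) + y^2) / (2 * x)"
    using assms by (simp add: field_simps)
  moreover have Npos: "0 < (m^2 + x^2 + 2*x*d) + y^2"
  proof -
    have "0 < x^2" "0 \<le> 2*x*d" "0 \<le> m^2" "0 \<le> y^2" using assms by simp_all
    then show ?thesis by linarith
  qed
  moreover have "1 / (2 * x * (N / (2 * x))^2) = 2 * x / N^2" if "0 < N" for N :: real
    using that assms by (simp add: power_divide field_simps power2_eq_square)
  ultimately show ?thesis by simp
qed

lemma pt_bound: assumes m: "0 < m" and x: "0 < x" and d: "0 \<le> d"
  defines "B \<equiv> m^2 + x^2 + 2*x*d" and "a \<equiv> 4*d + 2*m"
  shows "x / (B * sqrt B) \<le> 2 * sqrt 2 * (1 / (sqrt x * ((x + a) * sqrt (x + a))))"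
proof -
  define X where "X = x * (x + a) / 2"
  have apos: "0 < a" using m d unfolding a_def by simp
  have Xpos: "0 < X" using x apos unfolding X_def by simp
  have "B - X = (x - m)^2 / 2 + m^2 / 2" unfolding B_def X_def a_def by (simp add: power2_eq_square field_simps)
  then have XB: "X \<le> B" by (smt (verit) zero_le_power2 divide_nonneg_nonneg)
  have "X * sqrt X \<le> B * sqrt B" using XB Xpos by (intro mult_mono) auto
  then have "x / (B * sqrt B) \<le> x / (X * sqrt X)" using Xpos x XB by (intro divide_left_mono) auto
  also have "sqrt X = sqrt x * sqrt (x + a) / sqrt 2" unfolding X_def using x apos
    by (simp add: real_sqrt_mult real_sqrt_divide)
  also have "X * (sqrt x * sqrt (x + a) / sqrt 2) = x * ((x + a) * (sqrt x * sqrt (x + a))) / (2 * sqrt 2)"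
    unfolding X_def by (simp add: field_simps)
  also have "x / (x * ((x + a) * (sqrt x * sqrt (x + a))) / (2 * sqrt 2)) = 2 * sqrt 2 / ((x + a) * (sqrt x * sqrt (x + a)))"
  proof -
    have "x / (x * Y / (2 * sqrt 2)) = 2 * sqrt 2 / Y" if "0 < Y" for Y :: real
      using that x by (simp add: field_simps)
    moreover have "0 < (x + a) * (sqrt x * sqrt (x + a))" using x apos by simp
    ultimately show ?thesis by blast
  qed
  also have "\<dots> = 2 * sqrt 2 * (1 / (sqrt x * ((x + a) * sqrt (x + a))))" by (simp add: ac_simps)
  finally show ?thesis .
qed



lemma pair_borel: "f \<in> borel_measurable (borel \<Otimes>\<^sub>M borel) \<Longrightarrow> f \<in> borel_measurable (borel :: (real \<times> real) measure)"
  by (simp only: borel_prod)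

lemma KEY:
  assumes m: "0 < m" and d: "0 \<le> d"
  shows "(\<integral>\<^sup>+p. ennreal (1 / (2 * fst p * (omega m p + d)^2)) \<partial>mom_measure) \<le> ennreal (1 / (d + m))"
proof -
  define G where "G p = 1 / (2 * fst p * (omega m p + d)^2)" for p
  define a where "a = 4*d + 2*m"
  define c where "c = 2 * sqrt 2 / pi^2"
  define q where "q x = 1 / (sqrt x * ((x + a) * sqrt (x + a)))" for x
  have apos: "0 < a" unfolding a_def using m d by simp
  have cpos: "0 \<le> c" unfolding c_def by simp
  have Gm[measurable]: "G \<in> borel_measurable (borel \<Otimes>\<^sub>M borel)" unfolding G_def by measurable
  have "(\<integral>\<^sup>+p. ennreal (G p) \<partial>mom_measure) = (\<integral>\<^sup>+p. ennreal (indicator {q. 0 < fst q} p / (2 * pi)^2) * ennreal (G p) \<partial>lborel)"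
    by (rule nn_mom) (rule pair_borel, measurable)
  also have "\<dots> = (\<integral>\<^sup>+p. ennreal (indicator {q. 0 < fst q} p / (2 * pi)^2) * ennreal (G p) \<partial>(lborel \<Otimes>\<^sub>M lborel))"
    by (simp add: lborel_prod)
  also have "\<dots> = (\<integral>\<^sup>+x. \<integral>\<^sup>+y. ennreal (indicator {q. 0 < fst q} (x, y) / (2 * pi)^2) * ennreal (G (x, y)) \<partial>lborel \<partial>lborel)"
    by (rule lborel.nn_integral_fst[symmetric]) measurable
  also have "\<dots> \<le> (\<integral>\<^sup>+x. ennreal c * ennreal (indicator {0<..} x * q x) \<partial>lborel)"
  proof (intro nn_integral_mono)
    fix x :: real
    show "(\<integral>\<^sup>+y. ennreal (indicator {q. 0 < fst q} (x, y) / (2 * pi)^2) * ennreal (G (x, y)) \<partial>lborel)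
          \<le> ennreal c * ennreal (indicator {0<..} x * q x)"
    proof (cases "0 < x")
      case False then show ?thesis by (simp add: indicator_def)
    next
      case x: True
      define B where "B = m^2 + x^2 + 2*x*d"
      have Bpos: "0 < B" unfolding B_def using x m d by (intro add_pos_nonneg) auto
      have "(\<integral>\<^sup>+y. ennreal (indicator {q. 0 < fst q} (x, y) / (2 * pi)^2) * ennreal (G (x, y)) \<partial>lborel)
          = (\<integral>\<^sup>+y. ennreal (x / (2 * pi^2)) * ennreal (1 / (B + y^2)^2) \<partial>lborel)"
      proof (intro nn_integral_cong)
        fix y :: real
        have "G (x, y) = 2 * x / (B + y^2)^2" unfolding G_def omega_def B_def
          using g_eq[OF x d, of m y] by simp
        then show "ennreal (indicator {q. 0 < fst q} (x, y) / (2 * pi)^2) * ennreal (G (x, y))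
             = ennreal (x / (2 * pi^2)) * ennreal (1 / (B + y^2)^2)"
          using x by (simp add: ennreal_mult[symmetric] power_mult_distrib)
      qed
      also have "\<dots> = ennreal (x / (2 * pi^2)) * (\<integral>\<^sup>+y. ennreal (1 / (B + y^2)^2) \<partial>lborel)"
        by (rule nn_integral_cmult) simp
      also have "\<dots> \<le> ennreal (x / (2 * pi^2)) * ennreal (2 / (B * sqrt B))"
        by (intro mult_left_mono I1_nn Bpos) simp
      also have "\<dots> = ennreal (1 / pi^2 * (x / (B * sqrt B)))"
        using x Bpos by (simp add: ennreal_mult[symmetric])
      also have "\<dots> \<le> ennreal (1 / pi^2 * (2 * sqrt 2 * q x))"
        using pt_bound[OF m x d] unfolding B_def a_def q_def
        by (intro ennreal_leI mult_left_mono) auto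
      also have "\<dots> = ennreal c * ennreal (indicator {0<..} x * q x)"
      proof -
        have qn: "0 \<le> indicator {0<..} x * q x" unfolding q_def using x apos by simp
        have "1 / pi^2 * (2 * sqrt 2 * q x) = c * (indicator {0<..} x * q x)" using x unfolding c_def by simp
        then show ?thesis using ennreal_mult[OF cpos qn] by simp
      qed
      finally show ?thesis .
    qed
  qed
  also have "\<dots> = ennreal c * (\<integral>\<^sup>+x. ennreal (indicator {0<..} x * q x) \<partial>lborel)"
    by (rule nn_integral_cmult) (unfold q_def, measurable)
  also have "\<dots> = ennreal c * ennreal (2 / a)" unfolding q_def using I2_nn[OF apos] by simp
  also have "\<dots> \<le> ennreal (1 / (d + m))"
  proof -
    have "sqrt 2 \<le> 2" by (rule real_le_lsqrt) auto
    moreover have "3 * 3 \<le> pi * pi" using pi_gt3 by (intro mult_mono) auto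
    then have "9 \<le> pi^2" by (simp add: power2_eq_square)
    ultimately have c1: "c \<le> 1" unfolding c_def by (simp add: field_simps)
    have "c * (2 / a) \<le> 1 * (2 / a)" using c1 apos by (intro mult_right_mono) auto
    also have "2 / a \<le> 1 / (d + m)" unfolding a_def using m d by (simp add: field_simps)
    finally show ?thesis using cpos apos by (simp add: ennreal_mult[symmetric] ennreal_leI)
  qed
  finally show ?thesis unfolding G_def .
qed



lemma fock_ins:
  assumes j: "j < n" and f: "f \<in> borel_measurable (fock_measure n)"
  shows "integral\<^sup>N (fock_measure n) f =
    (\<integral>\<^sup>+x. \<integral>\<^sup>+y. f (x(j := y)) \<partial>mom_measure \<partial>(PiM ({..<n} - {j}) (\<lambda>_. mom_measure)))"
proof -
  have I: "insert j ({..<n} - {j}) = {..<n}" using j by auto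
  have "integral\<^sup>N (PiM (insert j ({..<n} - {j})) (\<lambda>_. mom_measure)) f =
    (\<integral>\<^sup>+x. \<integral>\<^sup>+y. f (x(j := y)) \<partial>mom_measure \<partial>(PiM ({..<n} - {j}) (\<lambda>_. mom_measure)))"
    by (rule fp.product_nn_integral_insert) (use f I in \<open>auto simp: fock_measure_def\<close>)
  then show ?thesis unfolding I fock_measure_def .
qed

lemma AE_fock_pos1:
  assumes i: "i < n"
  shows "AE k in fock_measure n. 0 < fst (k i)"
proof -
  have im: "i \<in> {..<n}" using i by simp
  have meas: "(\<lambda>k. indicator {k. \<not> 0 < fst (k i)} k :: ennreal) \<in> borel_measurable (fock_measure n)"
  proof -
    have "(\<lambda>k. k i) \<in> measurable (fock_measure n) mom_measure"
      unfolding fock_measure_def using im by measurable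
    moreover have "(\<lambda>p. indicator {p. \<not> 0 < fst p} p :: ennreal) \<in> borel_measurable mom_measure"
      by measurable
    ultimately have "(\<lambda>k. (\<lambda>p. indicator {p. \<not> 0 < fst p} p :: ennreal) (k i)) \<in> borel_measurable (fock_measure n)"
      by (rule measurable_compose)
    then show ?thesis by (simp add: indicator_def)
  qed
  have "integral\<^sup>N (fock_measure n) (indicator {k. \<not> 0 < fst (k i)}) =
    (\<integral>\<^sup>+x. \<integral>\<^sup>+y. indicator {k. \<not> 0 < fst (k i)} (x(i := y)) \<partial>mom_measure \<partial>(PiM ({..<n} - {i}) (\<lambda>_. mom_measure)))"
    by (rule fock_ins[OF i meas])
  also have "\<dots> = (\<integral>\<^sup>+x. 0 \<partial>(PiM ({..<n} - {i}) (\<lambda>_. mom_measure)))"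
  proof (intro nn_integral_cong)
    fix x
    have "(\<integral>\<^sup>+y. indicator {k. \<not> 0 < fst (k i)} (x(i := y)) \<partial>mom_measure) = (\<integral>\<^sup>+y. indicator {p. \<not> 0 < fst p} y \<partial>mom_measure)"
      by (simp add: indicator_def)
    also have "\<dots> = 0"
      using AE_mom_pos by (subst nn_integral_0_iff_AE) (auto simp: indicator_def elim!: eventually_mono)
    finally show "(\<integral>\<^sup>+y. indicator {k. \<not> 0 < fst (k i)} (x(i := y)) \<partial>mom_measure) = 0" .
  qed
  also have "\<dots> = 0" by simp
  finally have "integral\<^sup>N (fock_measure n) (indicator {k. \<not> 0 < fst (k i)}) = 0" .
  then have "AE k in fock_measure n. (indicator {k. \<not> 0 < fst (k i)} k :: ennreal) = 0"
    using nn_integral_0_iff_AE[OF meas] by simp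
  then show ?thesis by (rule eventually_mono) (simp add: indicator_def split: if_splits)
qed

lemma AE_fock_pos: "AE k in fock_measure n. \<forall>i<n. 0 < fst (k i)"
proof -
  have "AE k in fock_measure n. \<forall>i\<in>{..<n}. 0 < fst (k i)"
    by (rule eventually_ball_finite) (auto intro: AE_fock_pos1)
  then show ?thesis by (simp only: lessThan_iff Ball_def)
qed



lemma comp_meas[measurable]: "i \<in> {..<n} \<Longrightarrow> (\<lambda>k. k i) \<in> measurable (fock_measure n) mom_measure"
  unfolding fock_measure_def by measurable

lemma omega_mom[measurable]: "omega m \<in> borel_measurable mom_measure"
  using omega_meas[of m] by (subst measurable_cong_sets[OF sets_mom refl])

lemma fst_mom[measurable]: "(\<lambda>p. fst p :: real) \<in> borel_measurable mom_measure"
  by (subst measurable_cong_sets[OF sets_mom refl]) measurable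

lemma Hn_meas[measurable]: "(\<lambda>k. Hn m n k) \<in> borel_measurable (fock_measure n)"
proof -
  have "(\<lambda>k. \<Sum>i<n. omega m (k i)) \<in> borel_measurable (fock_measure n)"
  proof (rule borel_measurable_sum)
    fix i assume "i \<in> {..<n}"
    then have "(\<lambda>k. k i) \<in> measurable (fock_measure n) mom_measure" by (rule comp_meas)
    moreover have "omega m \<in> borel_measurable mom_measure" by measurable
    ultimately show "(\<lambda>k. omega m (k i)) \<in> borel_measurable (fock_measure n)"
      by (rule measurable_compose)
  qed
  then show ?thesis unfolding Hn_def .
qed

lemma upd_meas:
  assumes "j < n"
  shows "(\<lambda>x. (fst x)(j := snd x)) \<in> measurable (fock_measure n \<Otimes>\<^sub>M mom_measure) (fock_measure n)"
proof -
  have eq: "{..<n} \<union> {j} = {..<n}" using assms by auto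
  have "(\<lambda>x. (fst x)(j := snd x)) \<in> measurable (fock_measure n \<Otimes>\<^sub>M mom_measure) (PiM ({..<n} \<union> {j}) (\<lambda>_. mom_measure))"
    by (rule measurable_fun_upd[where J="{..<n}"]) (auto simp: fock_measure_def)
  then show ?thesis unfolding eq fock_measure_def .
qed

lemma U_meas:
  assumes j: "j < n" and psi: "\<psi> \<in> borel_measurable (fock_measure n)"
  shows "(\<lambda>x. U_integrand m \<mu>P E n \<psi> (fst x) j (snd x)) \<in> borel_measurable (fock_measure n \<Otimes>\<^sub>M mom_measure)"
proof -
  note um = upd_meas[OF j]
  have a: "(\<lambda>x. \<psi> ((fst x)(j := snd x))) \<in> borel_measurable (fock_measure n \<Otimes>\<^sub>M mom_measure)"
    using measurable_compose[OF um psi] .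
  have b: "(\<lambda>x. Hn m n ((fst x)(j := snd x))) \<in> borel_measurable (fock_measure n \<Otimes>\<^sub>M mom_measure)"
    using measurable_compose[OF um Hn_meas] .
  have c: "(\<lambda>x. fst x j) \<in> measurable (fock_measure n \<Otimes>\<^sub>M mom_measure) mom_measure"
    using measurable_compose[OF measurable_fst comp_meas[of j n]] j by simp
  have c2: "(\<lambda>x. omega m (fst x j)) \<in> borel_measurable (fock_measure n \<Otimes>\<^sub>M mom_measure)"
    using measurable_compose[OF c omega_mom[of m]] .
  have c3: "(\<lambda>x. fst (fst x j)) \<in> borel_measurable (fock_measure n \<Otimes>\<^sub>M mom_measure)"
    using measurable_compose[OF c fst_mom] .
  show ?thesis unfolding U_integrand_def
    using a b c2 c3 by measurable
qed

lemma K_meas: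
  shows "(\<lambda>x. K_integrand m \<mu>P E n (fst x) (snd x)) \<in> borel_measurable (fock_measure n \<Otimes>\<^sub>M mom_measure)"
  unfolding K_integrand_def by measurable



lemma norm_int_le:
  fixes f :: "'a \<Rightarrow> 'b::{banach, second_countable_topology}"
  shows "ennreal (norm (integral\<^sup>L M f)) \<le> (\<integral>\<^sup>+x. ennreal (norm (f x)) \<partial>M)"
proof (cases "integrable M f")
  case True then show ?thesis by (rule integral_norm_bound_ennreal)
next
  case False then show ?thesis by (simp add: not_integrable_integral_eq)
qed

lemma Hn_ge:
  assumes m: "0 < m" and k: "\<forall>i<n. 0 < fst (k i)"
  shows "real n * m \<le> Hn m n k"
proof -
  have "(\<Sum>i<n. m) \<le> (\<Sum>i<n. omega m (k i))"
    by (intro sum_mono omega_ge m) (use k in auto)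
  then show ?thesis unfolding Hn_def by simp
qed

lemma Hn_upd_ge:
  assumes m: "0 < m" and k: "\<forall>i<n. 0 < fst (k i)" and j: "j < n" and p: "0 < fst p"
  shows "real (n - 1) * m + omega m p \<le> Hn m n (k(j := p))"
proof -
  have "(\<Sum>i<n. (if i = j then omega m p else m)) \<le> (\<Sum>i<n. omega m ((k(j := p)) i))"
    by (intro sum_mono) (use k p m omega_ge in auto)
  moreover have "(\<Sum>i<n. (if i = j then omega m p else m)) = (\<Sum>i<n. m + (if i = j then omega m p - m else 0))"
    by (intro sum.cong) auto
  moreover have "\<dots> = real n * m + (omega m p - m)"
    using j by (simp add: sum.distrib)
  moreover have "real n * m + (omega m p - m) = real (n - 1) * m + omega m p"
    using j by (cases n) (auto simp: algebra_simps)
  ultimately show ?thesis unfolding Hn_def by simp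
qed

lemma cmod_ge_re: "a - Re E \<le> cmod (complex_of_real a - E)"
  using abs_Re_le_cmod[of "complex_of_real a - E"] by simp



definition alphaw :: "real \<Rightarrow> real \<Rightarrow> real \<Rightarrow> real \<times> real \<Rightarrow> real" where
  "alphaw m c d q = 1 / c^2 * (1 / (2 * fst q * (omega m q + d)^2))"

lemma alphaw_meas[measurable]: "alphaw m c d \<in> borel_measurable mom_measure"
  unfolding alphaw_def by measurable

lemma alphaw_int:
  assumes m: "0 < m" and c: "0 < c" and d: "0 \<le> d"
  shows "(\<integral>\<^sup>+q. ennreal (alphaw m c d q) \<partial>mom_measure) \<le> ennreal (1 / (c^2 * (d + m)))"
proof -
  have "(\<integral>\<^sup>+q. ennreal (alphaw m c d q) \<partial>mom_measure) = (\<integral>\<^sup>+q. ennreal (1/c^2) * ennreal (1 / (2 * fst q * (omega m q + d)^2)) \<partial>mom_measure)"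
    unfolding alphaw_def by (intro nn_integral_cong ennreal_mult') simp
  also have "\<dots> = ennreal (1/c^2) * (\<integral>\<^sup>+q. ennreal (1 / (2 * fst q * (omega m q + d)^2)) \<partial>mom_measure)"
    by (rule nn_integral_cmult) measurable
  also have "\<dots> \<le> ennreal (1/c^2) * ennreal (1 / (d + m))"
    by (intro mult_left_mono KEY m d) simp
  also have "\<dots> = ennreal (1 / (c^2 * (d + m)))"
    using c d m by (simp add: ennreal_mult[symmetric])
  finally show ?thesis .
qed

lemma alg3:
  fixes a b c1 c2 A B :: real
  assumes "0 < a" "0 < b"
  shows "(1 / (2 * sqrt (a * b)) / (c1 * A) / (c2 * B))^2 = 1 / c1^2 * (1 / (2 * b * A^2)) * (1 / c2^2 * (1 / (2 * a * B^2)))"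
proof -
  have "(1 / (2 * sqrt (a * b)) / (c1 * A) / (c2 * B))^2 = 1 / (4 * (sqrt (a * b))^2 * (c1^2 * A^2) * (c2^2 * B^2))"
    by (simp add: power_divide power_mult_distrib)
  also have "(sqrt (a * b))^2 = a * b" using assms by simp
  finally show ?thesis by (simp add: field_simps)
qed

lemma U_point:
  fixes \<psi> :: "(nat \<Rightarrow> real \<times> real) \<Rightarrow> complex"
  assumes m: "0 < m" and j: "j < n" and k: "k \<in> space (fock_measure n)" and kp: "\<forall>i<n. 0 < fst (k i)"
    and psi: "\<psi> \<in> borel_measurable (fock_measure n)"
    and c1: "0 < c1" and c2: "0 < c2" and d1: "0 \<le> d1" and d2: "0 \<le> d2"
    and H: "\<And>p. 0 < fst p \<Longrightarrow>
       c1 * (omega m (k j) + d1) \<le> cmod (complex_of_real (Hn m n (k(j := p)) + omega m (k j)) - E) \<and>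
       c2 * (omega m p + d2) \<le> cmod (complex_of_real (Hn m n (k(j := p)) + \<mu>P) - E)"
  shows "(\<integral>\<^sup>+p. ennreal (cmod (U_integrand m \<mu>P E n \<psi> k j p)) \<partial>mom_measure)^2
     \<le> ennreal (alphaw m c1 d1 (k j)) * ennreal (1 / (c2^2 * (d2 + m))) *
        (\<integral>\<^sup>+p. ennreal ((cmod (\<psi> (k(j := p))))^2) \<partial>mom_measure)"
proof -
  define q where "q = k j"
  have qpos: "0 < fst q" using kp j unfolding q_def by auto
  have oq: "m \<le> omega m q" using omega_ge[OF m qpos] .
  define w where "w p = 1 / (2 * sqrt (fst p * fst q)) / (c1 * (omega m q + d1)) / (c2 * (omega m p + d2))" for p
  have psim: "(\<lambda>p. \<psi> (k(j := p))) \<in> borel_measurable mom_measure"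
    using measurable_Pair2[OF measurable_compose[OF upd_meas[OF j] psi] k] by simp
  have wm: "w \<in> borel_measurable mom_measure" unfolding w_def by measurable
  have pt: "AE p in mom_measure. ennreal (cmod (U_integrand m \<mu>P E n \<psi> k j p)) \<le> ennreal (w p) * ennreal (cmod (\<psi> (k(j := p))))"
    using AE_mom_pos
  proof (rule eventually_mono)
    fix p :: "real \<times> real" assume p: "0 < fst p"
    have op: "m \<le> omega m p" using omega_ge[OF m p] .
    define D1 where "D1 = complex_of_real (Hn m n (k(j := p)) + omega m (k j)) - E"
    define D2 where "D2 = complex_of_real (Hn m n (k(j := p)) + \<mu>P) - E"
    have h1: "c1 * (omega m q + d1) \<le> cmod D1" and h2: "c2 * (omega m p + d2) \<le> cmod D2"
      using H[OF p] unfolding D1_def D2_def q_def by auto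
    have e1: "0 < c1 * (omega m q + d1)" using c1 d1 oq m by (intro mult_pos_pos) auto
    have e2: "0 < c2 * (omega m p + d2)" using c2 d2 op m by (intro mult_pos_pos) auto
    have s0: "0 \<le> 1 / (2 * sqrt (fst p * fst q))" using p qpos by simp
    have "cmod (U_integrand m \<mu>P E n \<psi> k j p) = 1 / (2 * sqrt (fst p * fst q)) / cmod D1 * (cmod (\<psi> (k(j := p))) / cmod D2)"
    proof -
      have "0 \<le> sqrt (fst p * fst (k j))" using p qpos unfolding q_def by simp
      then show ?thesis unfolding U_integrand_def D1_def D2_def q_def
        by (simp add: norm_mult norm_divide)
    qed
    also have "\<dots> \<le> 1 / (2 * sqrt (fst p * fst q)) / (c1 * (omega m q + d1)) * (cmod (\<psi> (k(j := p))) / (c2 * (omega m p + d2)))"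
      using h1 h2 e1 e2 s0 order.strict_trans2[OF e1 h1] order.strict_trans2[OF e2 h2]
      by (intro mult_mono divide_left_mono divide_right_mono) (auto intro: frac_le)
    also have "\<dots> = w p * cmod (\<psi> (k(j := p)))" unfolding w_def by simp
    finally have le: "cmod (U_integrand m \<mu>P E n \<psi> k j p) \<le> w p * cmod (\<psi> (k(j := p)))" .
    have wp: "0 \<le> w p" unfolding w_def using s0 e1 e2 by simp
    show "ennreal (cmod (U_integrand m \<mu>P E n \<psi> k j p)) \<le> ennreal (w p) * ennreal (cmod (\<psi> (k(j := p))))"
      using ennreal_leI[OF le] unfolding ennreal_mult[OF wp norm_ge_zero] .
  qed
  have "(\<integral>\<^sup>+p. ennreal (cmod (U_integrand m \<mu>P E n \<psi> k j p)) \<partial>mom_measure) \<le> (\<integral>\<^sup>+p. ennreal (w p) * ennreal (cmod (\<psi> (k(j := p)))) \<partial>mom_measure)"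
    by (rule nn_integral_mono_AE[OF pt])
  then have "(\<integral>\<^sup>+p. ennreal (cmod (U_integrand m \<mu>P E n \<psi> k j p)) \<partial>mom_measure)^2 \<le> (\<integral>\<^sup>+p. ennreal (w p) * ennreal (cmod (\<psi> (k(j := p)))) \<partial>mom_measure)^2"
    by (rule power_mono) simp
  also have "\<dots> \<le> (\<integral>\<^sup>+p. ennreal (w p) ^ 2 \<partial>mom_measure) * (\<integral>\<^sup>+p. ennreal (cmod (\<psi> (k(j := p)))) ^ 2 \<partial>mom_measure)"
    by (rule Cauchy_Schwarz_nn_integral) (use wm psim in measurable)
  also have "(\<integral>\<^sup>+p. ennreal (cmod (\<psi> (k(j := p)))) ^ 2 \<partial>mom_measure) = (\<integral>\<^sup>+p. ennreal ((cmod (\<psi> (k(j := p))))^2) \<partial>mom_measure)"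
    by (simp add: ennreal_power)
  also have "(\<integral>\<^sup>+p. ennreal (w p) ^ 2 \<partial>mom_measure) \<le> (\<integral>\<^sup>+p. ennreal (alphaw m c1 d1 q) * ennreal (alphaw m c2 d2 p) \<partial>mom_measure)"
    using AE_mom_pos
  proof (rule nn_integral_mono_AE[OF eventually_mono])
    fix p :: "real \<times> real" assume p: "0 < fst p"
    have op: "m \<le> omega m p" using omega_ge[OF m p] .
    have "(w p)^2 = alphaw m c1 d1 q * alphaw m c2 d2 p"
      unfolding w_def alphaw_def using alg3[OF p qpos] by simp
    moreover have "0 \<le> w p" unfolding w_def using p qpos c1 c2 d1 d2 oq op m by simp
    moreover have "0 \<le> alphaw m c1 d1 q" "0 \<le> alphaw m c2 d2 p"
      unfolding alphaw_def using p qpos by simp_all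
    ultimately show "ennreal (w p) ^ 2 \<le> ennreal (alphaw m c1 d1 q) * ennreal (alphaw m c2 d2 p)"
      by (simp add: ennreal_power ennreal_mult[symmetric])
  qed
  also have "\<dots> = ennreal (alphaw m c1 d1 q) * (\<integral>\<^sup>+p. ennreal (alphaw m c2 d2 p) \<partial>mom_measure)"
    by (rule nn_integral_cmult) measurable
  also have "\<dots> \<le> ennreal (alphaw m c1 d1 q) * ennreal (1 / (c2^2 * (d2 + m)))"
    by (intro mult_left_mono alphaw_int m c2 d2) simp
  finally show ?thesis unfolding q_def by (simp only: mult.assoc) (meson mult_right_mono zero_le)
qed



abbreviation "Pj n j \<equiv> PiM ({..<n} - {j}) (\<lambda>_. mom_measure)"

lemma upd_meas2:
  assumes "j < n"
  shows "(\<lambda>x. (fst x)(j := snd x)) \<in> measurable (Pj n j \<Otimes>\<^sub>M mom_measure) (fock_measure n)"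
proof -
  have eq: "insert j ({..<n} - {j}) = {..<n}" using assms by auto
  have "(\<lambda>(f, y). f(j := y)) \<in> measurable (Pj n j \<Otimes>\<^sub>M mom_measure) (PiM (insert j ({..<n} - {j})) (\<lambda>_. mom_measure))"
    by (rule measurable_add_dim)
  then show ?thesis unfolding eq fock_measure_def by (simp add: case_prod_beta')
qed

lemma U_est_j:
  fixes \<psi> :: "(nat \<Rightarrow> real \<times> real) \<Rightarrow> complex"
  assumes m: "0 < m" and j: "j < n" and psi: "\<psi> \<in> borel_measurable (fock_measure n)"
    and c1: "0 < c1" and c2: "0 < c2" and d1: "0 \<le> d1" and d2: "0 \<le> d2"
    and H: "\<And>k p. \<forall>i<n. 0 < fst (k i) \<Longrightarrow> 0 < fst p \<Longrightarrow>
       c1 * (omega m (k j) + d1) \<le> cmod (complex_of_real (Hn m n (k(j := p)) + omega m (k j)) - E) \<and>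
       c2 * (omega m p + d2) \<le> cmod (complex_of_real (Hn m n (k(j := p)) + \<mu>P) - E)"
  shows "(\<integral>\<^sup>+k. (\<integral>\<^sup>+p. ennreal (cmod (U_integrand m \<mu>P E n \<psi> k j p)) \<partial>mom_measure)^2 \<partial>fock_measure n)
     \<le> ennreal (1 / (c1^2 * (d1 + m)) * (1 / (c2^2 * (d2 + m)))) * (\<integral>\<^sup>+k. ennreal ((cmod (\<psi> k))^2) \<partial>fock_measure n)"
proof -
  define A1 where "A1 = 1 / (c1^2 * (d1 + m))"
  define A2 where "A2 = 1 / (c2^2 * (d2 + m))"
  have A1p: "0 \<le> A1" and A2p: "0 \<le> A2" unfolding A1_def A2_def using m d1 d2 by auto
  define G where "G k = (\<integral>\<^sup>+p. ennreal ((cmod (\<psi> (k(j := p))))^2) \<partial>mom_measure)" for k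
  have psi2: "(\<lambda>x. ennreal ((cmod (\<psi> ((fst x)(j := snd x))))^2)) \<in> borel_measurable (fock_measure n \<Otimes>\<^sub>M mom_measure)"
    using measurable_compose[OF upd_meas[OF j] psi] by measurable
  have Gm: "G \<in> borel_measurable (fock_measure n)"
    unfolding G_def using psi2 by measurable
  have psi3: "(\<lambda>x. ennreal ((cmod (\<psi> ((fst x)(j := snd x))))^2)) \<in> borel_measurable (Pj n j \<Otimes>\<^sub>M mom_measure)"
    using measurable_compose[OF upd_meas2[OF j] psi] by measurable
  have G'm: "(\<lambda>x. \<integral>\<^sup>+p. ennreal ((cmod (\<psi> (x(j := p))))^2) \<partial>mom_measure) \<in> borel_measurable (Pj n j)"
    using psi3 by measurable
  have jm: "j \<in> {..<n}" using j by simp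
  have am: "(\<lambda>k. alphaw m c1 d1 (k j)) \<in> borel_measurable (fock_measure n)"
    using measurable_compose[OF comp_meas[OF jm] alphaw_meas] .
  have "(\<integral>\<^sup>+k. (\<integral>\<^sup>+p. ennreal (cmod (U_integrand m \<mu>P E n \<psi> k j p)) \<partial>mom_measure)^2 \<partial>fock_measure n)
      \<le> (\<integral>\<^sup>+k. ennreal (alphaw m c1 d1 (k j)) * ennreal A2 * G k \<partial>fock_measure n)"
  proof (rule nn_integral_mono_AE)
    show "AE k in fock_measure n. (\<integral>\<^sup>+p. ennreal (cmod (U_integrand m \<mu>P E n \<psi> k j p)) \<partial>mom_measure)^2
       \<le> ennreal (alphaw m c1 d1 (k j)) * ennreal A2 * G k"
      using AE_fock_pos AE_space
    proof (eventually_elim)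
      case (elim k)
      show ?case unfolding A2_def G_def
        by (rule U_point[OF m j elim(2) elim(1) psi c1 c2 d1 d2 H[OF elim(1)]])
    qed
  qed
  also have "\<dots> = (\<integral>\<^sup>+x. \<integral>\<^sup>+y. ennreal (alphaw m c1 d1 ((x(j := y)) j)) * ennreal A2 * G (x(j := y)) \<partial>mom_measure \<partial>Pj n j)"
    by (rule fock_ins[OF j]) (use am Gm in measurable)
  also have "\<dots> = (\<integral>\<^sup>+x. (\<integral>\<^sup>+y. ennreal (alphaw m c1 d1 y) \<partial>mom_measure) * (ennreal A2 * (\<integral>\<^sup>+p. ennreal ((cmod (\<psi> (x(j := p))))^2) \<partial>mom_measure)) \<partial>Pj n j)"
  proof (intro nn_integral_cong)
    fix x
    have "(\<integral>\<^sup>+y. ennreal (alphaw m c1 d1 ((x(j := y)) j)) * ennreal A2 * G (x(j := y)) \<partial>mom_measure)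
        = (\<integral>\<^sup>+y. ennreal (alphaw m c1 d1 y) * (ennreal A2 * (\<integral>\<^sup>+p. ennreal ((cmod (\<psi> (x(j := p))))^2) \<partial>mom_measure)) \<partial>mom_measure)"
      unfolding G_def by (simp add: mult.assoc)
    also have "\<dots> = (\<integral>\<^sup>+y. ennreal (alphaw m c1 d1 y) \<partial>mom_measure) * (ennreal A2 * (\<integral>\<^sup>+p. ennreal ((cmod (\<psi> (x(j := p))))^2) \<partial>mom_measure))"
      by (rule nn_integral_multc) measurable
    finally show "(\<integral>\<^sup>+y. ennreal (alphaw m c1 d1 ((x(j := y)) j)) * ennreal A2 * G (x(j := y)) \<partial>mom_measure)
        = (\<integral>\<^sup>+y. ennreal (alphaw m c1 d1 y) \<partial>mom_measure) * (ennreal A2 * (\<integral>\<^sup>+p. ennreal ((cmod (\<psi> (x(j := p))))^2) \<partial>mom_measure))" .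
  qed
  also have "\<dots> \<le> (\<integral>\<^sup>+x. ennreal A1 * (ennreal A2 * (\<integral>\<^sup>+p. ennreal ((cmod (\<psi> (x(j := p))))^2) \<partial>mom_measure)) \<partial>Pj n j)"
    by (intro nn_integral_mono mult_right_mono) (auto simp: A1_def intro!: alphaw_int m c1 d1)
  also have "\<dots> = ennreal (A1 * A2) * (\<integral>\<^sup>+x. \<integral>\<^sup>+p. ennreal ((cmod (\<psi> (x(j := p))))^2) \<partial>mom_measure \<partial>Pj n j)"
    using A1p A2p G'm by (subst nn_integral_cmult[symmetric]) (auto simp: ennreal_mult mult.assoc)
  also have "(\<integral>\<^sup>+x. \<integral>\<^sup>+p. ennreal ((cmod (\<psi> (x(j := p))))^2) \<partial>mom_measure \<partial>Pj n j) = (\<integral>\<^sup>+k. ennreal ((cmod (\<psi> k))^2) \<partial>fock_measure n)"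
    by (rule fock_ins[OF j, symmetric]) (use psi in measurable)
  finally show ?thesis unfolding A1_def A2_def .
qed



lemma Ij_meas:
  assumes j: "j < n" and psi: "\<psi> \<in> borel_measurable (fock_measure n)"
  shows "(\<lambda>k. \<integral>\<^sup>+p. ennreal (cmod (U_integrand m \<mu>P E n \<psi> k j p)) \<partial>mom_measure) \<in> borel_measurable (fock_measure n)"
  using U_meas[OF j psi, of m \<mu>P E] by measurable

lemma U_full:
  fixes \<psi> :: "(nat \<Rightarrow> real \<times> real) \<Rightarrow> complex"
  assumes m: "0 < m" and psi: "\<psi> \<in> borel_measurable (fock_measure n)"
    and c1: "0 < c1" and c2: "0 < c2" and d1: "0 \<le> d1" and d2: "0 \<le> d2"
    and H: "\<And>j k p. j < n \<Longrightarrow> \<forall>i<n. 0 < fst (k i) \<Longrightarrow> 0 < fst p \<Longrightarrow>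
       c1 * (omega m (k j) + d1) \<le> cmod (complex_of_real (Hn m n (k(j := p)) + omega m (k j)) - E) \<and>
       c2 * (omega m p + d2) \<le> cmod (complex_of_real (Hn m n (k(j := p)) + \<mu>P) - E)"
  shows "(\<integral>\<^sup>+k. ennreal ((cmod (Utilde m \<mu>P lam E n \<psi> k))^2) \<partial>fock_measure n)
     \<le> ennreal ((lam^2 * real n)^2 * (1 / (c1^2 * (d1 + m)) * (1 / (c2^2 * (d2 + m))))) * (\<integral>\<^sup>+k. ennreal ((cmod (\<psi> k))^2) \<partial>fock_measure n)"
proof -
  define A where "A = 1 / (c1^2 * (d1 + m)) * (1 / (c2^2 * (d2 + m)))"
  have Ap: "0 \<le> A" unfolding A_def using m d1 d2 by auto
  define T where "T j k = (\<integral>p. U_integrand m \<mu>P E n \<psi> k j p \<partial>mom_measure)" for j k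
  define I where "I j k = (\<integral>\<^sup>+p. ennreal (cmod (U_integrand m \<mu>P E n \<psi> k j p)) \<partial>mom_measure)" for j k
  define L where "L = lam^4 * real n"
  have Lp: "0 \<le> L" unfolding L_def by simp
  have TI: "ennreal (cmod (T j k)) \<le> I j k" for j k unfolding T_def I_def by (rule norm_int_le)
  have pt: "ennreal ((cmod (Utilde m \<mu>P lam E n \<psi> k))^2) \<le> ennreal L * (\<Sum>j<n. (I j k)^2)" for k
  proof -
    have "cmod (Utilde m \<mu>P lam E n \<psi> k) = lam^2 * cmod (\<Sum>j<n. T j k)"
      unfolding Utilde_def T_def by (simp add: norm_mult norm_power)
    also have "\<dots> \<le> lam^2 * (\<Sum>j<n. cmod (T j k))"
      by (intro mult_left_mono norm_sum) simp
    finally have "(cmod (Utilde m \<mu>P lam E n \<psi> k))^2 \<le> (lam^2 * (\<Sum>j<n. cmod (T j k)))^2"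
      by (intro power_mono) auto
    also have "\<dots> = lam^4 * (\<Sum>j<n. cmod (T j k))^2" by (simp add: power_mult_distrib)
    also have "\<dots> \<le> lam^4 * ((\<Sum>j<n. (cmod (T j k))^2) * real n)"
      using sum_squared_le_sum_of_squares[of "\<lambda>j. cmod (T j k)" "{..<n}"] by (intro mult_left_mono) auto
    also have "\<dots> = L * (\<Sum>j<n. (cmod (T j k))^2)" unfolding L_def by simp
    finally have "ennreal ((cmod (Utilde m \<mu>P lam E n \<psi> k))^2) \<le> ennreal (L * (\<Sum>j<n. (cmod (T j k))^2))"
      by (rule ennreal_leI)
    also have "\<dots> = ennreal L * (\<Sum>j<n. ennreal (cmod (T j k)) ^ 2)"
      using Lp by (simp add: ennreal_mult' ennreal_power)
    also have "\<dots> \<le> ennreal L * (\<Sum>j<n. (I j k)^2)"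
      by (intro mult_left_mono sum_mono power_mono TI) auto
    finally show ?thesis .
  qed
  have Im: "j < n \<Longrightarrow> (\<lambda>k. I j k) \<in> borel_measurable (fock_measure n)" for j
    unfolding I_def by (rule Ij_meas[OF _ psi])
  have "(\<integral>\<^sup>+k. ennreal ((cmod (Utilde m \<mu>P lam E n \<psi> k))^2) \<partial>fock_measure n) \<le> (\<integral>\<^sup>+k. ennreal L * (\<Sum>j<n. (I j k)^2) \<partial>fock_measure n)"
    by (intro nn_integral_mono pt)
  also have "\<dots> = ennreal L * (\<Sum>j<n. \<integral>\<^sup>+k. (I j k)^2 \<partial>fock_measure n)"
  proof -
    have s: "(\<integral>\<^sup>+k. (\<Sum>j<n. (I j k)^2) \<partial>fock_measure n) = (\<Sum>j<n. \<integral>\<^sup>+k. (I j k)^2 \<partial>fock_measure n)"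
    proof (rule nn_integral_sum)
      fix j assume "j \<in> {..<n}"
      then have "(\<lambda>k. I j k) \<in> borel_measurable (fock_measure n)" using Im by simp
      then show "(\<lambda>k. (I j k)^2) \<in> borel_measurable (fock_measure n)" by measurable
    qed
    have m2: "(\<lambda>k. \<Sum>j<n. (I j k)^2) \<in> borel_measurable (fock_measure n)"
    proof (rule borel_measurable_sum)
      fix j assume "j \<in> {..<n}"
      then have "(\<lambda>k. I j k) \<in> borel_measurable (fock_measure n)" using Im by simp
      then show "(\<lambda>k. (I j k)^2) \<in> borel_measurable (fock_measure n)" by measurable
    qed
    show ?thesis using m2 by (subst nn_integral_cmult) (auto simp: s)
  qed
  also have "\<dots> \<le> ennreal L * (\<Sum>j<n. ennreal A * (\<integral>\<^sup>+k. ennreal ((cmod (\<psi> k))^2) \<partial>fock_measure n))"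
  proof (intro mult_left_mono sum_mono)
    fix j assume "j \<in> {..<n}"
    then have j: "j < n" by simp
    show "(\<integral>\<^sup>+k. (I j k)^2 \<partial>fock_measure n) \<le> ennreal A * (\<integral>\<^sup>+k. ennreal ((cmod (\<psi> k))^2) \<partial>fock_measure n)"
      unfolding I_def A_def by (rule U_est_j[OF m j psi c1 c2 d1 d2 H[OF j]])
  qed simp
  also have "\<dots> = ennreal ((lam^2 * real n)^2 * A) * (\<integral>\<^sup>+k. ennreal ((cmod (\<psi> k))^2) \<partial>fock_measure n)"
  proof -
    define X where "X = (\<integral>\<^sup>+k. ennreal ((cmod (\<psi> k))^2) \<partial>fock_measure n)"
    have "(\<Sum>j<n. ennreal A * X) = ennreal (real n) * (ennreal A * X)"
      by (simp add: ennreal_of_nat_eq_real_of_nat)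
    then have "ennreal L * (\<Sum>j<n. ennreal A * X) = ennreal (L * real n * A) * X"
      using Lp Ap by (simp add: ennreal_mult' mult.assoc)
    moreover have "L * real n * A = (lam^2 * real n)^2 * A" unfolding L_def by (simp add: power_mult_distrib power2_eq_square numeral_eq_Suc)
    ultimately show ?thesis unfolding X_def by simp
  qed
  finally show ?thesis unfolding A_def .
qed

lemma U_integrable:
  fixes \<psi> :: "(nat \<Rightarrow> real \<times> real) \<Rightarrow> complex"
  assumes m: "0 < m" and psi: "\<psi> \<in> borel_measurable (fock_measure n)"
    and fin: "(\<integral>\<^sup>+k. ennreal ((cmod (\<psi> k))^2) \<partial>fock_measure n) < \<infinity>"
    and c1: "0 < c1" and c2: "0 < c2" and d1: "0 \<le> d1" and d2: "0 \<le> d2"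
    and H: "\<And>j k p. j < n \<Longrightarrow> \<forall>i<n. 0 < fst (k i) \<Longrightarrow> 0 < fst p \<Longrightarrow>
       c1 * (omega m (k j) + d1) \<le> cmod (complex_of_real (Hn m n (k(j := p)) + omega m (k j)) - E) \<and>
       c2 * (omega m p + d2) \<le> cmod (complex_of_real (Hn m n (k(j := p)) + \<mu>P) - E)"
  shows "AE k in fock_measure n. \<forall>j<n. integrable mom_measure (U_integrand m \<mu>P E n \<psi> k j)"
proof -
  have "AE k in fock_measure n. \<forall>j\<in>{..<n}. integrable mom_measure (U_integrand m \<mu>P E n \<psi> k j)"
  proof (rule eventually_ball_finite)
    show "\<forall>j\<in>{..<n}. AE k in fock_measure n. integrable mom_measure (U_integrand m \<mu>P E n \<psi> k j)"
    proof
      fix j assume "j \<in> {..<n}"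
      then have j: "j < n" by simp
      define I where "I k = (\<integral>\<^sup>+p. ennreal (cmod (U_integrand m \<mu>P E n \<psi> k j p)) \<partial>mom_measure)" for k
      have Im: "(\<lambda>k. (I k)^2) \<in> borel_measurable (fock_measure n)"
        unfolding I_def using Ij_meas[OF j psi] by measurable
      have "(\<integral>\<^sup>+k. (I k)^2 \<partial>fock_measure n) \<le> ennreal (1 / (c1^2 * (d1 + m)) * (1 / (c2^2 * (d2 + m)))) * (\<integral>\<^sup>+k. ennreal ((cmod (\<psi> k))^2) \<partial>fock_measure n)"
        unfolding I_def by (rule U_est_j[OF m j psi c1 c2 d1 d2 H[OF j]])
      also have "\<dots> < \<infinity>" using fin by (simp add: ennreal_mult_less_top)
      finally have "(\<integral>\<^sup>+k. (I k)^2 \<partial>fock_measure n) \<noteq> \<infinity>" by simp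
      from nn_integral_PInf_AE[OF Im this]
      have "AE k in fock_measure n. (I k)^2 \<noteq> \<infinity>" .
      then show "AE k in fock_measure n. integrable mom_measure (U_integrand m \<mu>P E n \<psi> k j)"
        using AE_space
      proof eventually_elim
        case (elim k)
        have "I k < \<infinity>" using elim(1) by (simp add: power_eq_top_ennreal top.not_eq_extremum)
        moreover have "U_integrand m \<mu>P E n \<psi> k j \<in> borel_measurable mom_measure"
          using measurable_Pair2[OF U_meas[OF j psi] elim(2)] by simp
        ultimately show ?case unfolding I_def by (intro integrableI_bounded) auto
      qed
    qed
  qed simp
  then show ?thesis by (simp only: lessThan_iff Ball_def)
qed



lemma K_pt_alg:
  fixes w t m :: real
  assumes m: "0 < m" and w: "m \<le> w" and t: "0 \<le> t"
  shows "1 / (w * (w + t)) \<le> 2 / (w + sqrt (m * t))^2"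
proof -
  define s where "s = sqrt (m * t)"
  have s0: "0 \<le> s" unfolding s_def using m t by simp
  have s2: "s^2 = m * t" unfolding s_def using m t by simp
  have "(w + s)^2 \<le> 2 * w^2 + 2 * s^2"
    using zero_le_power2[of "w - s"] by (simp add: power2_eq_square algebra_simps)
  also have "\<dots> \<le> 2 * (w * (w + t))" unfolding s2 using w t m mult_right_mono[OF w t]
    by (simp add: power2_eq_square algebra_simps)
  finally have le: "(w + s)^2 \<le> 2 * (w * (w + t))" .
  have pos: "0 < (w + s)^2" using w m s0 by simp
  have pos2: "0 < w * (w + t)" using w m t by simp
  have "1 / (w * (w + t)) = 2 / (2 * (w * (w + t)))" by simp
  also have "\<dots> \<le> 2 / (w + s)^2" using le pos pos2 by (intro divide_left_mono) auto
  finally show ?thesis unfolding s_def .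
qed

lemma K_point:
  assumes m: "0 < m" and mu: "\<mu>P < m" and mu0: "0 < \<mu>P" and t: "0 \<le> t" and c: "0 < c"
    and Hk: "\<And>p. 0 < fst p \<Longrightarrow> c * (omega m p + t) \<le> cmod (complex_of_real (Hn m n k + omega m p) - E)"
  shows "(\<integral>\<^sup>+p. ennreal (cmod (K_integrand m \<mu>P E n k p)) \<partial>mom_measure)
     \<le> ennreal (2 / ((m - \<mu>P) / m * c) * (1 / (sqrt (m * t) + m)))"
proof -
  define c0 where "c0 = (m - \<mu>P) / m"
  have c0p: "0 < c0" unfolding c0_def using m mu by simp
  define s where "s = sqrt (m * t)"
  have s0: "0 \<le> s" unfolding s_def using m t by simp
  define CC where "CC = 2 / (c0 * c)"
  have CCp: "0 \<le> CC" unfolding CC_def using c0p c by simp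
  have "(\<integral>\<^sup>+p. ennreal (cmod (K_integrand m \<mu>P E n k p)) \<partial>mom_measure)
      \<le> (\<integral>\<^sup>+p. ennreal CC * ennreal (1 / (2 * fst p * (omega m p + s)^2)) \<partial>mom_measure)"
  proof (rule nn_integral_mono_AE)
    show "AE p in mom_measure. ennreal (cmod (K_integrand m \<mu>P E n k p)) \<le> ennreal CC * ennreal (1 / (2 * fst p * (omega m p + s)^2))"
      using AE_mom_pos
    proof eventually_elim
      case (elim p)
      define w where "w = omega m p"
      have w: "m \<le> w" unfolding w_def using omega_ge[OF m elim] .
      define D where "D = complex_of_real (Hn m n k + omega m p) - E"
      have hD: "c * (w + t) \<le> cmod D" unfolding D_def w_def using Hk[OF elim] .
      have e1: "0 < c * (w + t)" using c w m t by simp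
      have c0w: "c0 * w \<le> w - \<mu>P"
      proof -
        have "w - \<mu>P - c0 * w = \<mu>P * (w / m - 1)" unfolding c0_def using m by (simp add: field_simps)
        moreover have "0 \<le> \<mu>P * (w / m - 1)" using mu0 w m by (simp add: field_simps)
        ultimately show ?thesis by linarith
      qed
      have e2: "0 < c0 * w" using c0p w m by simp
      have pp: "0 \<le> 1 / (2 * fst p)" using elim by simp
      have "cmod (K_integrand m \<mu>P E n k p) = 1 / (2 * fst p) / ((w - \<mu>P) * cmod D)"
      proof -
        have "w - \<mu>P > 0" using w mu by simp
        moreover have "cmod (complex_of_real (omega m p) - complex_of_real \<mu>P) = omega m p - \<mu>P"
          unfolding of_real_diff[symmetric] norm_of_real using calculation unfolding w_def by simp
        ultimately show ?thesis unfolding K_integrand_def D_def w_def using pp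
          by (simp add: norm_mult norm_divide)
      qed
      also have "\<dots> \<le> 1 / (2 * fst p) / ((c0 * w) * (c * (w + t)))"
        using pp c0w hD e1 e2 c0p c w m t mu order.strict_trans2[OF e1 hD] by (intro divide_left_mono mult_mono mult_pos_pos) auto
      also have "\<dots> = CC / 2 * (1 / (2 * fst p)) * (1 / (w * (w + t)))"
        unfolding CC_def using c0p c by (simp add: field_simps)
      also have "\<dots> \<le> CC / 2 * (1 / (2 * fst p)) * (2 / (w + s)^2)"
        using K_pt_alg[OF m w t] CCp pp unfolding s_def by (intro mult_left_mono) auto
      also have "\<dots> = CC * (1 / (2 * fst p * (w + s)^2))" by simp
      finally have "cmod (K_integrand m \<mu>P E n k p) \<le> CC * (1 / (2 * fst p * (omega m p + s)^2))"
        unfolding w_def .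
      then show ?case using CCp by (simp add: ennreal_mult'[symmetric] ennreal_leI)
    qed
  qed
  also have "\<dots> = ennreal CC * (\<integral>\<^sup>+p. ennreal (1 / (2 * fst p * (omega m p + s)^2)) \<partial>mom_measure)"
    by (rule nn_integral_cmult) measurable
  also have "\<dots> \<le> ennreal CC * ennreal (1 / (s + m))"
    by (intro mult_left_mono KEY m s0) simp
  also have "\<dots> = ennreal (2 / ((m - \<mu>P) / m * c) * (1 / (sqrt (m * t) + m)))"
    using CCp unfolding CC_def c0_def s_def by (simp add: ennreal_mult'[symmetric])
  finally show ?thesis .
qed



lemma zero_sector: "(\<lambda>_. 0) \<in> fock_sector n" and l2_zero: "l2norm n (\<lambda>_. 0) = 0"
  unfolding fock_sector_def symmetric_fn_def l2norm_def by auto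

lemma sector_nn:
  assumes "\<psi> \<in> fock_sector n"
  shows "(\<integral>\<^sup>+k. ennreal ((cmod (\<psi> k))^2) \<partial>fock_measure n) = ennreal (\<integral>k. (cmod (\<psi> k))^2 \<partial>fock_measure n)"
  using assms unfolding fock_sector_def by (intro nn_integral_eq_integral) auto

lemma op_from_nn:
  assumes psi: "\<psi> \<in> fock_sector n" and phim: "\<phi> \<in> borel_measurable (fock_measure n)"
    and sym: "symmetric_fn n \<phi>" and C: "0 \<le> C"
    and le: "(\<integral>\<^sup>+k. ennreal ((cmod (\<phi> k))^2) \<partial>fock_measure n) \<le> ennreal (C^2) * (\<integral>\<^sup>+k. ennreal ((cmod (\<psi> k))^2) \<partial>fock_measure n)"
  shows "\<phi> \<in> fock_sector n \<and> l2norm n \<phi> \<le> C * l2norm n \<psi>"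
proof -
  define I where "I = (\<integral>k. (cmod (\<psi> k))^2 \<partial>fock_measure n)"
  have I0: "0 \<le> I" unfolding I_def by simp
  have le2: "(\<integral>\<^sup>+k. ennreal ((cmod (\<phi> k))^2) \<partial>fock_measure n) \<le> ennreal (C^2 * I)"
    using le unfolding sector_nn[OF psi] I_def[symmetric] ennreal_mult[OF zero_le_power2 I0] .
  have iphi: "integrable (fock_measure n) (\<lambda>k. (cmod (\<phi> k))^2)"
  proof (rule integrableI_bounded)
    show "(\<lambda>k. (cmod (\<phi> k))^2) \<in> borel_measurable (fock_measure n)" using phim by measurable
    have "(\<integral>\<^sup>+k. ennreal (norm ((cmod (\<phi> k))^2)) \<partial>fock_measure n) = (\<integral>\<^sup>+k. ennreal ((cmod (\<phi> k))^2) \<partial>fock_measure n)"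
      by simp
    also have "\<dots> < \<infinity>" using le2 by (simp add: le_less_trans)
    finally show "(\<integral>\<^sup>+k. ennreal (norm ((cmod (\<phi> k))^2)) \<partial>fock_measure n) < \<infinity>" .
  qed
  have "ennreal (\<integral>k. (cmod (\<phi> k))^2 \<partial>fock_measure n) = (\<integral>\<^sup>+k. ennreal ((cmod (\<phi> k))^2) \<partial>fock_measure n)"
    using iphi by (intro nn_integral_eq_integral[symmetric]) auto
  then have "ennreal (\<integral>k. (cmod (\<phi> k))^2 \<partial>fock_measure n) \<le> ennreal (C^2 * I)" using le2 by simp
  then have J: "(\<integral>k. (cmod (\<phi> k))^2 \<partial>fock_measure n) \<le> C^2 * I"
    using I0 by (simp add: ennreal_le_iff)
  have "l2norm n \<phi> \<le> sqrt (C^2 * I)" unfolding l2norm_def using J by simp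
  also have "\<dots> = C * l2norm n \<psi>" unfolding l2norm_def I_def using C by (simp add: real_sqrt_mult)
  finally have "l2norm n \<phi> \<le> C * l2norm n \<psi>" .
  moreover have "\<phi> \<in> fock_sector n" unfolding fock_sector_def using phim iphi sym by auto
  ultimately show ?thesis by simp
qed

lemma op_norm_le:
  assumes C: "0 \<le> C" and b: "\<And>\<psi>. \<psi> \<in> fock_sector n \<Longrightarrow> l2norm n (T \<psi>) \<le> C * l2norm n \<psi>"
  shows "0 \<le> op_norm n T \<and> op_norm n T \<le> C"
proof -
  define S where "S = {l2norm n (T \<psi>) | \<psi>. \<psi> \<in> fock_sector n \<and> l2norm n \<psi> \<le> 1}"
  have ne: "l2norm n (T (\<lambda>_. 0)) \<in> S" unfolding S_def using zero_sector l2_zero by fastforce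
  have ub: "\<forall>x\<in>S. x \<le> C"
  proof
    fix x assume "x \<in> S"
    then obtain \<psi> where psi: "\<psi> \<in> fock_sector n" "l2norm n \<psi> \<le> 1" and x: "x = l2norm n (T \<psi>)"
      unfolding S_def by blast
    have "x \<le> C * l2norm n \<psi>" using b[OF psi(1)] x by simp
    also have "\<dots> \<le> C * 1" using psi(2) C by (intro mult_left_mono) auto
    finally show "x \<le> C" by simp
  qed
  have "op_norm n T = Sup S" unfolding op_norm_def S_def ..
  moreover have "Sup S \<le> C" using ne ub by (intro cSup_least) auto
  moreover have "l2norm n (T (\<lambda>_. 0)) \<le> Sup S" using ne ub by (intro cSup_upper) (auto intro: bdd_aboveI)
  moreover have "0 \<le> l2norm n (T (\<lambda>_. 0))" unfolding l2norm_def by simp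
  ultimately show ?thesis by linarith
qed

lemma Hn_perm:
  assumes "\<pi> permutes {..<n}"
  shows "Hn m n (k \<circ> \<pi>) = Hn m n k"
  unfolding Hn_def using sum.permute[OF assms, of "\<lambda>i. omega m (k i)"] by (simp add: comp_def)

lemma space_fock: "space (fock_measure n) = PiE {..<n} (\<lambda>_. UNIV)"
  unfolding fock_measure_def by (simp add: space_PiM)

lemma sym_K:
  assumes "symmetric_fn n \<psi>"
  shows "symmetric_fn n (Ktilde m \<mu>P lam E n \<psi>)"
  unfolding symmetric_fn_def
proof (intro allI impI ballI)
  fix \<pi> k assume p: "\<pi> permutes {..<n}" and k: "k \<in> space (fock_measure n)"
  have "\<psi> (k \<circ> \<pi>) = \<psi> k" using assms p k unfolding symmetric_fn_def by blast
  moreover have "K_integrand m \<mu>P E n (k \<circ> \<pi>) = K_integrand m \<mu>P E n k"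
    unfolding K_integrand_def Hn_perm[OF p] ..
  ultimately show "Ktilde m \<mu>P lam E n \<psi> (k \<circ> \<pi>) = Ktilde m \<mu>P lam E n \<psi> k"
    unfolding Ktilde_def by simp
qed

lemma sym_U:
  assumes "symmetric_fn n \<psi>"
  shows "symmetric_fn n (Utilde m \<mu>P lam E n \<psi>)"
  unfolding symmetric_fn_def
proof (intro allI impI ballI)
  fix \<pi> k assume p: "\<pi> permutes {..<n}" and k: "k \<in> space (fock_measure n)"
  have bij: "bij \<pi>" using p by (rule permutes_bij)
  have inj: "inj \<pi>" using bij by (rule bij_is_inj)
  have pj: "j < n \<Longrightarrow> \<pi> j < n" for j using permutes_in_image[OF p] by simp
  have eqU: "U_integrand m \<mu>P E n \<psi> (k \<circ> \<pi>) j = U_integrand m \<mu>P E n \<psi> k (\<pi> j)" if j: "j < n" for j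
  proof
    fix q
    have upd: "(k \<circ> \<pi>)(j := q) = (k(\<pi> j := q)) \<circ> \<pi>"
      using inj by (auto simp: fun_eq_iff inj_eq)
    have sp: "k(\<pi> j := q) \<in> space (fock_measure n)"
      using k pj[OF j] unfolding space_fock by (auto simp: PiE_iff extensional_def)
    have psi: "\<psi> ((k(\<pi> j := q)) \<circ> \<pi>) = \<psi> (k(\<pi> j := q))"
      using assms p sp unfolding symmetric_fn_def by blast
    show "U_integrand m \<mu>P E n \<psi> (k \<circ> \<pi>) j q = U_integrand m \<mu>P E n \<psi> k (\<pi> j) q"
      unfolding U_integrand_def upd Hn_perm[OF p] psi by simp
  qed
  have "(\<Sum>j<n. \<integral>q. U_integrand m \<mu>P E n \<psi> (k \<circ> \<pi>) j q \<partial>mom_measure)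
      = (\<Sum>j<n. \<integral>q. U_integrand m \<mu>P E n \<psi> k (\<pi> j) q \<partial>mom_measure)"
    using eqU by (intro sum.cong) auto
  also have "\<dots> = (\<Sum>j<n. \<integral>q. U_integrand m \<mu>P E n \<psi> k j q \<partial>mom_measure)"
    using sum.permute[OF p, of "\<lambda>j. \<integral>q. U_integrand m \<mu>P E n \<psi> k j q \<partial>mom_measure"] by (simp add: comp_def)
  finally show "Utilde m \<mu>P lam E n \<psi> (k \<circ> \<pi>) = Utilde m \<mu>P lam E n \<psi> k"
    unfolding Utilde_def by simp
qed



lemma K_all:
  assumes m: "0 < m" and mu: "\<mu>P < m" and mu0: "0 < \<mu>P" and t: "0 \<le> t" and c: "0 < c"
    and H: "\<And>k p. \<forall>i<n. 0 < fst (k i) \<Longrightarrow> 0 < fst p \<Longrightarrow> c * (omega m p + t) \<le> cmod (complex_of_real (Hn m n k + omega m p) - E)"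
  shows "(AE k in fock_measure n. integrable mom_measure (K_integrand m \<mu>P E n k))
    \<and> (\<forall>\<psi>\<in>fock_sector n. Ktilde m \<mu>P lam E n \<psi> \<in> fock_sector n \<and>
         l2norm n (Ktilde m \<mu>P lam E n \<psi>) \<le> lam^2 * (2 / ((m - \<mu>P) / m * c) * (1 / (sqrt (m * t) + m))) * l2norm n \<psi>)"
proof -
  define BK where "BK = 2 / ((m - \<mu>P) / m * c) * (1 / (sqrt (m * t) + m))"
  have BK0: "0 \<le> BK" unfolding BK_def using m mu c t by simp
  have good: "AE k in fock_measure n. integrable mom_measure (K_integrand m \<mu>P E n k) \<and> cmod (\<integral>p. K_integrand m \<mu>P E n k p \<partial>mom_measure) \<le> BK"
    using AE_fock_pos AE_space
  proof eventually_elim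
    case (elim k)
    have kp: "(\<integral>\<^sup>+p. ennreal (cmod (K_integrand m \<mu>P E n k p)) \<partial>mom_measure) \<le> ennreal BK"
      unfolding BK_def by (rule K_point[OF m mu mu0 t c H[OF elim(1)]])
    have km: "K_integrand m \<mu>P E n k \<in> borel_measurable mom_measure"
      using measurable_Pair2[OF K_meas elim(2)] by simp
    have "integrable mom_measure (K_integrand m \<mu>P E n k)"
      using kp km by (intro integrableI_bounded) (auto intro: le_less_trans)
    moreover have "ennreal (cmod (\<integral>p. K_integrand m \<mu>P E n k p \<partial>mom_measure)) \<le> ennreal BK"
      using norm_int_le kp by (rule order.trans)
    then have "cmod (\<integral>p. K_integrand m \<mu>P E n k p \<partial>mom_measure) \<le> BK"
      using BK0 by (simp add: ennreal_le_iff)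
    ultimately show ?case by simp
  qed
  have F1: "\<forall>\<psi>\<in>fock_sector n. Ktilde m \<mu>P lam E n \<psi> \<in> fock_sector n \<and> l2norm n (Ktilde m \<mu>P lam E n \<psi>) \<le> lam^2 * BK * l2norm n \<psi>"
  proof
    fix \<psi> assume psi: "\<psi> \<in> fock_sector n"
    have psim: "\<psi> \<in> borel_measurable (fock_measure n)" using psi unfolding fock_sector_def by simp
    have sym: "symmetric_fn n \<psi>" using psi unfolding fock_sector_def by simp
    have intm: "(\<lambda>k. \<integral>p. K_integrand m \<mu>P E n k p \<partial>mom_measure) \<in> borel_measurable (fock_measure n)"
      using K_meas[of m \<mu>P E n] by measurable
    have phim: "Ktilde m \<mu>P lam E n \<psi> \<in> borel_measurable (fock_measure n)"
      unfolding Ktilde_def using intm psim by measurable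
    have C0: "0 \<le> lam^2 * BK" using BK0 by simp
    have "(\<integral>\<^sup>+k. ennreal ((cmod (Ktilde m \<mu>P lam E n \<psi> k))^2) \<partial>fock_measure n)
        \<le> (\<integral>\<^sup>+k. ennreal ((lam^2 * BK)^2) * ennreal ((cmod (\<psi> k))^2) \<partial>fock_measure n)"
    proof (rule nn_integral_mono_AE)
      show "AE k in fock_measure n. ennreal ((cmod (Ktilde m \<mu>P lam E n \<psi> k))^2) \<le> ennreal ((lam^2 * BK)^2) * ennreal ((cmod (\<psi> k))^2)"
        using good
      proof eventually_elim
        case (elim k)
        have "cmod (Ktilde m \<mu>P lam E n \<psi> k) = lam^2 * cmod (\<integral>p. K_integrand m \<mu>P E n k p \<partial>mom_measure) * cmod (\<psi> k)"
          unfolding Ktilde_def by (simp add: norm_mult norm_power)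
        also have "\<dots> \<le> lam^2 * BK * cmod (\<psi> k)"
          using elim by (intro mult_right_mono mult_left_mono) auto
        finally have "(cmod (Ktilde m \<mu>P lam E n \<psi> k))^2 \<le> (lam^2 * BK * cmod (\<psi> k))^2"
          by (intro power_mono) auto
        also have "\<dots> = (lam^2 * BK)^2 * (cmod (\<psi> k))^2" by (simp add: power_mult_distrib)
        finally show ?case by (simp add: ennreal_mult'[symmetric] ennreal_leI)
      qed
    qed
    also have "\<dots> = ennreal ((lam^2 * BK)^2) * (\<integral>\<^sup>+k. ennreal ((cmod (\<psi> k))^2) \<partial>fock_measure n)"
      using psim by (intro nn_integral_cmult) measurable
    finally show "Ktilde m \<mu>P lam E n \<psi> \<in> fock_sector n \<and> l2norm n (Ktilde m \<mu>P lam E n \<psi>) \<le> lam^2 * BK * l2norm n \<psi>"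
      by (rule op_from_nn[OF psi phim sym_K[OF sym] C0])
  qed
  have F2: "AE k in fock_measure n. integrable mom_measure (K_integrand m \<mu>P E n k)"
    using good by (rule eventually_mono) (rule conjunct1)
  show ?thesis unfolding BK_def[symmetric] by (rule conjI[OF F2 F1])
qed



lemma U_all:
  fixes \<psi> :: "(nat \<Rightarrow> real \<times> real) \<Rightarrow> complex"
  assumes m: "0 < m" and psi: "\<psi> \<in> fock_sector n"
    and c1: "0 < c1" and c2: "0 < c2" and d1: "0 \<le> d1" and d2: "0 \<le> d2"
    and H: "\<And>j k p. j < n \<Longrightarrow> \<forall>i<n. 0 < fst (k i) \<Longrightarrow> 0 < fst p \<Longrightarrow>
       c1 * (omega m (k j) + d1) \<le> cmod (complex_of_real (Hn m n (k(j := p)) + omega m (k j)) - E) \<and>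
       c2 * (omega m p + d2) \<le> cmod (complex_of_real (Hn m n (k(j := p)) + \<mu>P) - E)"
  shows "(AE k in fock_measure n. \<forall>j<n. integrable mom_measure (U_integrand m \<mu>P E n \<psi> k j))
    \<and> Utilde m \<mu>P lam E n \<psi> \<in> fock_sector n
    \<and> l2norm n (Utilde m \<mu>P lam E n \<psi>) \<le> lam^2 * real n * sqrt (1 / (c1^2 * (d1 + m)) * (1 / (c2^2 * (d2 + m)))) * l2norm n \<psi>"
proof -
  define A where "A = 1 / (c1^2 * (d1 + m)) * (1 / (c2^2 * (d2 + m)))"
  have A0: "0 \<le> A" unfolding A_def using m d1 d2 by simp
  have psim: "\<psi> \<in> borel_measurable (fock_measure n)" using psi unfolding fock_sector_def by simp
  have sym: "symmetric_fn n \<psi>" using psi unfolding fock_sector_def by simp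
  have fin: "(\<integral>\<^sup>+k. ennreal ((cmod (\<psi> k))^2) \<partial>fock_measure n) < \<infinity>"
    unfolding sector_nn[OF psi] by simp
  have phim: "Utilde m \<mu>P lam E n \<psi> \<in> borel_measurable (fock_measure n)"
  proof -
    have "(\<lambda>k. \<Sum>j<n. \<integral>p. U_integrand m \<mu>P E n \<psi> k j p \<partial>mom_measure) \<in> borel_measurable (fock_measure n)"
    proof (rule borel_measurable_sum)
      fix j assume "j \<in> {..<n}"
      then have j: "j < n" by simp
      show "(\<lambda>k. \<integral>p. U_integrand m \<mu>P E n \<psi> k j p \<partial>mom_measure) \<in> borel_measurable (fock_measure n)"
        using U_meas[OF j psim, of m \<mu>P E] by measurable
    qed
    then have "(\<lambda>k. complex_of_real (lam^2) * (\<Sum>j<n. \<integral>p. U_integrand m \<mu>P E n \<psi> k j p \<partial>mom_measure)) \<in> borel_measurable (fock_measure n)"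
      by (intro borel_measurable_times borel_measurable_const)
    then show ?thesis unfolding Utilde_def[abs_def] .
  qed
  have C0: "0 \<le> lam^2 * real n * sqrt A" using A0 by simp
  have le: "(\<integral>\<^sup>+k. ennreal ((cmod (Utilde m \<mu>P lam E n \<psi> k))^2) \<partial>fock_measure n)
     \<le> ennreal ((lam^2 * real n * sqrt A)^2) * (\<integral>\<^sup>+k. ennreal ((cmod (\<psi> k))^2) \<partial>fock_measure n)"
  proof -
    have eq: "(lam^2 * real n * sqrt A)^2 = (lam^2 * real n)^2 * A" using A0 by (simp add: power_mult_distrib)
    show ?thesis unfolding eq unfolding A_def by (rule U_full[OF m psim c1 c2 d1 d2 H])
  qed
  have R1: "Utilde m \<mu>P lam E n \<psi> \<in> fock_sector n \<and> l2norm n (Utilde m \<mu>P lam E n \<psi>) \<le> lam^2 * real n * sqrt A * l2norm n \<psi>"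
    by (rule op_from_nn[OF psi phim sym_U[OF sym] C0 le])
  have R2: "AE k in fock_measure n. \<forall>j<n. integrable mom_measure (U_integrand m \<mu>P E n \<psi> k j)"
    by (rule U_integrable[OF m psim fin c1 c2 d1 d2 H])
  show ?thesis unfolding A_def[symmetric] using R1 R2 by (intro conjI) simp_all
qed



lemma lin_at_top: "LIM x at_bot. (a - x :: real) :> at_top"
proof -
  have "LIM x at_top. (a + x :: real) :> at_top"
    by (rule filterlim_tendsto_add_at_top[OF tendsto_const filterlim_ident])
  then show ?thesis unfolding filterlim_at_bot_mirror by simp
qed

lemma lim1: "((\<lambda>x::real. 1 / (a - x)) \<longlongrightarrow> 0) at_bot"
  using tendsto_inverse_0_at_top[OF lin_at_top[of a]] by (simp add: divide_inverse)

lemma lim2: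
  assumes m: "0 < (m::real)"
  shows "((\<lambda>x::real. 1 / (sqrt (m * (b - x)) + m)) \<longlongrightarrow> 0) at_bot"
proof -
  have "LIM x at_bot. m * (b - x) :> at_top"
    by (rule filterlim_tendsto_pos_mult_at_top[OF tendsto_const m lin_at_top])
  then have "LIM x at_bot. sqrt (m * (b - x)) :> at_top"
    by (rule filterlim_compose[OF sqrt_at_top])
  then have "LIM x at_bot. m + sqrt (m * (b - x)) :> at_top"
    by (rule filterlim_tendsto_add_at_top[OF tendsto_const])
  from tendsto_inverse_0_at_top[OF this] show ?thesis by (simp add: divide_inverse add.commute)
qed

lemma eps_bound:
  fixes w m \<delta> :: real
  assumes m: "0 < m" and w: "m \<le> w" and d: "0 < \<delta>"
  shows "min 1 (\<delta> / m) * w \<le> w - m + \<delta>"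
proof (cases "m \<le> \<delta>")
  case True then show ?thesis using m by (simp add: min_def)
next
  case False
  then have e: "min 1 (\<delta> / m) = \<delta> / m" using m by (simp add: min_def)
  have "0 \<le> (1 - \<delta> / m) * (w - m)" using False m w by (intro mult_nonneg_nonneg) (auto simp: field_simps)
  then show ?thesis unfolding e using m by (simp add: field_simps)
qed



lemma rn: "1 \<le> n \<Longrightarrow> real (n - 1) = real n - 1" by (simp add: of_nat_diff)

lemma den1:
  assumes m: "0 < m" and "1 \<le> n" "\<forall>i<n. 0 < fst (k i)" "j < n" "0 < fst p"
  shows "real n * m + omega m q - Re E \<le> cmod (complex_of_real (Hn m n (k(j := p)) + omega m q) - E)"
proof -
  have "real (n - 1) * m + omega m p \<le> Hn m n (k(j := p))" by (rule Hn_upd_ge[OF m assms(3,4,5)])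
  moreover have "m \<le> omega m p" by (rule omega_ge[OF m assms(5)])
  ultimately have "real n * m \<le> Hn m n (k(j := p))" using rn[OF assms(2)] by (simp add: algebra_simps)
  then show ?thesis using cmod_ge_re[of "Hn m n (k(j := p)) + omega m q" E] by linarith
qed

lemma den2:
  assumes m: "0 < m" and "\<forall>i<n. 0 < fst (k i)" "j < n" "0 < fst p"
  shows "real (n - 1) * m + omega m p + \<mu>P - Re E \<le> cmod (complex_of_real (Hn m n (k(j := p)) + \<mu>P) - E)"
proof -
  have "real (n - 1) * m + omega m p \<le> Hn m n (k(j := p))" by (rule Hn_upd_ge[OF m assms(2,3,4)])
  then show ?thesis using cmod_ge_re[of "Hn m n (k(j := p)) + \<mu>P" E] by linarith
qed

lemma denK:
  assumes m: "0 < m" and "\<forall>i<n. 0 < fst (k i)"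
  shows "real n * m + omega m p - Re E \<le> cmod (complex_of_real (Hn m n k + omega m p) - E)"
proof -
  have "real n * m \<le> Hn m n k" by (rule Hn_ge[OF m assms(2)])
  then show ?thesis using cmod_ge_re[of "Hn m n k + omega m p" E] by linarith
qed

lemma U_opnorm:
  assumes m: "0 < m" and mu0: "0 < \<mu>P" and mu: "\<mu>P < m" and n: "1 \<le> n"
    and E: "Re E < (real n - 1) * m + \<mu>P"
  shows "0 \<le> op_norm n (Utilde m \<mu>P lam E n) \<and>
    op_norm n (Utilde m \<mu>P lam E n) \<le> lam^2 * real n / ((real n - 1) * m + \<mu>P - Re E)"
proof -
  define D where "D = (real n - 1) * m + \<mu>P - Re E"
  have Dp: "0 < D" unfolding D_def using E by simp
  have HU: "1 * (omega m (k j) + D) \<le> cmod (complex_of_real (Hn m n (k(j := p)) + omega m (k j)) - E) \<and>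
     1 * (omega m p + D) \<le> cmod (complex_of_real (Hn m n (k(j := p)) + \<mu>P) - E)"
    if "j < n" "\<forall>i<n. 0 < fst (k i)" "0 < fst p" for j k p
  proof
    have "1 * (omega m (k j) + D) \<le> real n * m + omega m (k j) - Re E" unfolding D_def using mu by (simp add: algebra_simps)
    also have "\<dots> \<le> cmod (complex_of_real (Hn m n (k(j := p)) + omega m (k j)) - E)"
      by (rule den1[OF m n that(2,1,3)])
    finally show "1 * (omega m (k j) + D) \<le> cmod (complex_of_real (Hn m n (k(j := p)) + omega m (k j)) - E)" .
    have "1 * (omega m p + D) = real (n - 1) * m + omega m p + \<mu>P - Re E" unfolding D_def rn[OF n] by simp
    also have "\<dots> \<le> cmod (complex_of_real (Hn m n (k(j := p)) + \<mu>P) - E)" by (rule den2[OF m that(2,1,3)])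
    finally show "1 * (omega m p + D) \<le> cmod (complex_of_real (Hn m n (k(j := p)) + \<mu>P) - E)" .
  qed
  have sq: "sqrt (1 / (1^2 * (D + m)) * (1 / (1^2 * (D + m)))) = 1 / (D + m)"
    using Dp m by (simp add: real_sqrt_mult[symmetric] power2_eq_square[symmetric])
  have UA: "\<And>\<psi>. \<psi> \<in> fock_sector n \<Longrightarrow> l2norm n (Utilde m \<mu>P lam E n \<psi>) \<le> lam^2 * real n * (1 / (D + m)) * l2norm n \<psi>"
    using U_all[OF m _ zero_less_one zero_less_one less_imp_le[OF Dp] less_imp_le[OF Dp] HU] unfolding sq by blast
  have C0: "0 \<le> lam^2 * real n * (1 / (D + m))" using Dp m by simp
  have on: "0 \<le> op_norm n (Utilde m \<mu>P lam E n) \<and> op_norm n (Utilde m \<mu>P lam E n) \<le> lam^2 * real n * (1 / (D + m))"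
    by (rule op_norm_le[OF C0 UA])
  have "lam^2 * real n * (1 / (D + m)) \<le> lam^2 * real n * (1 / D)"
    using Dp m by (intro mult_left_mono divide_left_mono) auto
  also have "\<dots> = lam^2 * real n / ((real n - 1) * m + \<mu>P - Re E)" unfolding D_def by simp
  finally show ?thesis using on by linarith
qed



lemma K_opnorm:
  assumes m: "0 < m" and mu0: "0 < \<mu>P" and mu: "\<mu>P < m" and x: "x \<le> real n * m"
  shows "0 \<le> op_norm n (Ktilde m \<mu>P lam (complex_of_real x) n) \<and>
    op_norm n (Ktilde m \<mu>P lam (complex_of_real x) n) \<le> lam^2 * (2 / ((m - \<mu>P) / m * 1) * (1 / (sqrt (m * (real n * m - x)) + m)))"
proof -
  have t: "0 \<le> real n * m - x" using x by simp
  have HK: "1 * (omega m p + (real n * m - x)) \<le> cmod (complex_of_real (Hn m n k + omega m p) - complex_of_real x)"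
    if "\<forall>i<n. 0 < fst (k i)" "0 < fst p" for k p
    using denK[OF m that(1), of p "complex_of_real x"] by simp
  have KA: "\<And>\<psi>. \<psi> \<in> fock_sector n \<Longrightarrow>
     l2norm n (Ktilde m \<mu>P lam (complex_of_real x) n \<psi>) \<le> lam^2 * (2 / ((m - \<mu>P) / m * 1) * (1 / (sqrt (m * (real n * m - x)) + m))) * l2norm n \<psi>"
    using K_all[OF m mu mu0 t zero_less_one HK, of lam] by blast
  have C0: "0 \<le> lam^2 * (2 / ((m - \<mu>P) / m * 1) * (1 / (sqrt (m * (real n * m - x)) + m)))"
    using m mu t by simp
  show ?thesis by (rule op_norm_le[OF C0 KA])
qed

theorem mainTheorem1:
  fixes m \<mu>P :: real
  assumes "0 < m" and "0 < \<mu>P" and "\<mu>P < m"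
  shows
    "(\<forall>lam > 0. \<forall>n \<ge> 1. \<forall>E. Re E < real n * m + \<mu>P \<longrightarrow>
        (AE k in fock_measure n. integrable mom_measure (K_integrand m \<mu>P E n k))
      \<and> bounded_op n (Ktilde m \<mu>P lam E n)
      \<and> (\<forall>\<psi> \<in> fock_sector n. AE k in fock_measure n.
            \<forall>j < n. integrable mom_measure (U_integrand m \<mu>P E n \<psi> k j))
      \<and> bounded_op n (Utilde m \<mu>P lam E n))
   \<and> (\<exists>C > 0. \<forall>lam > 0. \<forall>n \<ge> 1. \<forall>E. Re E < (real n - 1) * m + \<mu>P \<longrightarrow>
        op_norm n (Utilde m \<mu>P lam E n)
          \<le> C * lam^2 * real n / ((real n - 1) * m + \<mu>P - Re E))
   \<and> (\<forall>lam > 0. \<forall>n \<ge> 1.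
        ((\<lambda>x::real. op_norm n (Ktilde m \<mu>P lam (complex_of_real x) n)) \<longlongrightarrow> 0) at_bot
      \<and> ((\<lambda>x::real. op_norm n (Utilde m \<mu>P lam (complex_of_real x) n)) \<longlongrightarrow> 0) at_bot)"
proof -
  note m = assms(1) and mu0 = assms(2) and mu = assms(3)
  define c0 where "c0 = (m - \<mu>P) / m"
  have c0p: "0 < c0" unfolding c0_def using m mu by simp
  have c0w: "c0 * w \<le> w - \<mu>P" if "m \<le> w" for w
  proof -
    have "w - \<mu>P - c0 * w = \<mu>P * (w / m - 1)" unfolding c0_def using m by (simp add: field_simps)
    moreover have "0 \<le> \<mu>P * (w / m - 1)" using mu0 that m by (simp add: field_simps)
    ultimately show ?thesis by linarith
  qed
  have P1: "\<forall>lam > 0. \<forall>n \<ge> 1. \<forall>E. Re E < real n * m + \<mu>P \<longrightarrow>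
        (AE k in fock_measure n. integrable mom_measure (K_integrand m \<mu>P E n k))
      \<and> bounded_op n (Ktilde m \<mu>P lam E n)
      \<and> (\<forall>\<psi> \<in> fock_sector n. AE k in fock_measure n.
            \<forall>j < n. integrable mom_measure (U_integrand m \<mu>P E n \<psi> k j))
      \<and> bounded_op n (Utilde m \<mu>P lam E n)"
  proof (intro allI impI)
    fix lam :: real and n :: nat and E :: complex
    assume lam: "0 < lam" and n: "1 \<le> n" and E: "Re E < real n * m + \<mu>P"
    define \<delta> where "\<delta> = real n * m + \<mu>P - Re E"
    have dp: "0 < \<delta>" unfolding \<delta>_def using E by simp
    define \<epsilon> where "\<epsilon> = min 1 (\<delta> / m)"
    have ep: "0 < \<epsilon>" unfolding \<epsilon>_def using dp m by simp
    have HK: "c0 * (omega m p + 0) \<le> cmod (complex_of_real (Hn m n k + omega m p) - E)"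
      if "\<forall>i<n. 0 < fst (k i)" "0 < fst p" for k p
    proof -
      have w: "m \<le> omega m p" by (rule omega_ge[OF m that(2)])
      have "c0 * (omega m p + 0) \<le> omega m p - \<mu>P" using c0w[OF w] by simp
      also have "\<dots> \<le> real n * m + omega m p - Re E" using E by simp
      also have "\<dots> \<le> cmod (complex_of_real (Hn m n k + omega m p) - E)" by (rule denK[OF m that(1)])
      finally show ?thesis .
    qed
    have KA: "(AE k in fock_measure n. integrable mom_measure (K_integrand m \<mu>P E n k))
      \<and> (\<forall>\<psi>\<in>fock_sector n. Ktilde m \<mu>P lam E n \<psi> \<in> fock_sector n \<and>
         l2norm n (Ktilde m \<mu>P lam E n \<psi>) \<le> lam^2 * (2 / ((m - \<mu>P) / m * c0) * (1 / (sqrt (m * 0) + m))) * l2norm n \<psi>)"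
      by (rule K_all[OF m mu mu0 order.refl c0p HK])
    have HU: "c0 * (omega m (k j) + 0) \<le> cmod (complex_of_real (Hn m n (k(j := p)) + omega m (k j)) - E) \<and>
       \<epsilon> * (omega m p + 0) \<le> cmod (complex_of_real (Hn m n (k(j := p)) + \<mu>P) - E)"
      if "j < n" "\<forall>i<n. 0 < fst (k i)" "0 < fst p" for j k p
    proof
      have wq: "m \<le> omega m (k j)" using omega_ge[OF m] that(1,2) by auto
      have wp: "m \<le> omega m p" by (rule omega_ge[OF m that(3)])
      have "c0 * (omega m (k j) + 0) \<le> omega m (k j) - \<mu>P" using c0w[OF wq] by simp
      also have "\<dots> \<le> real n * m + omega m (k j) - Re E" using E by simp
      also have "\<dots> \<le> cmod (complex_of_real (Hn m n (k(j := p)) + omega m (k j)) - E)"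
        by (rule den1[OF m n that(2,1,3)])
      finally show "c0 * (omega m (k j) + 0) \<le> cmod (complex_of_real (Hn m n (k(j := p)) + omega m (k j)) - E)" .
      have "\<epsilon> * (omega m p + 0) \<le> omega m p - m + \<delta>" unfolding \<epsilon>_def using eps_bound[OF m wp dp] by simp
      also have "\<dots> = real (n - 1) * m + omega m p + \<mu>P - Re E" unfolding \<delta>_def rn[OF n] by (simp add: algebra_simps)
      also have "\<dots> \<le> cmod (complex_of_real (Hn m n (k(j := p)) + \<mu>P) - E)" by (rule den2[OF m that(2,1,3)])
      finally show "\<epsilon> * (omega m p + 0) \<le> cmod (complex_of_real (Hn m n (k(j := p)) + \<mu>P) - E)" .
    qed
    have UA: "\<And>\<psi>. \<psi> \<in> fock_sector n \<Longrightarrow> (AE k in fock_measure n. \<forall>j<n. integrable mom_measure (U_integrand m \<mu>P E n \<psi> k j))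
      \<and> Utilde m \<mu>P lam E n \<psi> \<in> fock_sector n
      \<and> l2norm n (Utilde m \<mu>P lam E n \<psi>) \<le> lam^2 * real n * sqrt (1 / (c0^2 * (0 + m)) * (1 / (\<epsilon>^2 * (0 + m)))) * l2norm n \<psi>"
      by (rule U_all[OF m _ c0p ep order.refl order.refl HU])
    show "(AE k in fock_measure n. integrable mom_measure (K_integrand m \<mu>P E n k))
      \<and> bounded_op n (Ktilde m \<mu>P lam E n)
      \<and> (\<forall>\<psi> \<in> fock_sector n. AE k in fock_measure n.
            \<forall>j < n. integrable mom_measure (U_integrand m \<mu>P E n \<psi> k j))
      \<and> bounded_op n (Utilde m \<mu>P lam E n)"
    proof (intro conjI)
      show "AE k in fock_measure n. integrable mom_measure (K_integrand m \<mu>P E n k)" using KA by (rule conjunct1)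
      show "bounded_op n (Ktilde m \<mu>P lam E n)" unfolding bounded_op_def using conjunct2[OF KA] by (intro exI)
      show "\<forall>\<psi> \<in> fock_sector n. AE k in fock_measure n. \<forall>j < n. integrable mom_measure (U_integrand m \<mu>P E n \<psi> k j)"
        using UA by simp
      show "bounded_op n (Utilde m \<mu>P lam E n)" unfolding bounded_op_def
        by (rule exI[of _ "lam^2 * real n * sqrt (1 / (c0^2 * (0 + m)) * (1 / (\<epsilon>^2 * (0 + m))))"]) (use UA in blast)
    qed
  qed
  have P2: "\<exists>C > 0. \<forall>lam > 0. \<forall>n \<ge> 1. \<forall>E. Re E < (real n - 1) * m + \<mu>P \<longrightarrow>
        op_norm n (Utilde m \<mu>P lam E n)
          \<le> C * lam^2 * real n / ((real n - 1) * m + \<mu>P - Re E)"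
  proof (intro exI[of _ 1] conjI allI impI)
    fix lam :: real and n :: nat and E :: complex
    assume "0 < lam" "1 \<le> n" "Re E < (real n - 1) * m + \<mu>P"
    then show "op_norm n (Utilde m \<mu>P lam E n) \<le> 1 * lam^2 * real n / ((real n - 1) * m + \<mu>P - Re E)"
      using U_opnorm[OF m mu0 mu, of n E lam] by simp
  qed simp
  have P3: "\<forall>lam > 0. \<forall>n \<ge> 1.
        ((\<lambda>x::real. op_norm n (Ktilde m \<mu>P lam (complex_of_real x) n)) \<longlongrightarrow> 0) at_bot
      \<and> ((\<lambda>x::real. op_norm n (Utilde m \<mu>P lam (complex_of_real x) n)) \<longlongrightarrow> 0) at_bot"
  proof (intro allI impI conjI)
    fix lam :: real and n :: nat
    assume lam: "0 < lam" and n: "1 \<le> n"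
    define BK where "BK x = lam^2 * (2 / ((m - \<mu>P) / m * 1) * (1 / (sqrt (m * (real n * m - x)) + m)))" for x
    have "((\<lambda>x. (lam^2 * (2 / ((m - \<mu>P) / m * 1))) * (1 / (sqrt (m * (real n * m - x)) + m))) \<longlongrightarrow> (lam^2 * (2 / ((m - \<mu>P) / m * 1))) * 0) at_bot"
      by (intro tendsto_mult tendsto_const lim2 m)
    then have BK0: "(BK \<longlongrightarrow> 0) at_bot"
      unfolding BK_def by (simp only: mult.assoc mult_zero_right)
    show "((\<lambda>x::real. op_norm n (Ktilde m \<mu>P lam (complex_of_real x) n)) \<longlongrightarrow> 0) at_bot"
    proof (rule tendsto_sandwich[OF _ _ tendsto_const BK0])
      show "\<forall>\<^sub>F x in at_bot. 0 \<le> op_norm n (Ktilde m \<mu>P lam (complex_of_real x) n)"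
        using eventually_le_at_bot[of "real n * m"]
        by (rule eventually_mono) (use K_opnorm[OF m mu0 mu] in blast)
      show "\<forall>\<^sub>F x in at_bot. op_norm n (Ktilde m \<mu>P lam (complex_of_real x) n) \<le> BK x"
        using eventually_le_at_bot[of "real n * m"]
        by (rule eventually_mono) (unfold BK_def, use K_opnorm[OF m mu0 mu] in blast)
    qed
    define BU where "BU x = lam^2 * real n * (1 / ((real n - 1) * m + \<mu>P - x))" for x
    have BU0: "(BU \<longlongrightarrow> 0) at_bot"
      unfolding BU_def using tendsto_mult_right_zero[OF lim1[of "(real n - 1) * m + \<mu>P"]] by simp
    show "((\<lambda>x::real. op_norm n (Utilde m \<mu>P lam (complex_of_real x) n)) \<longlongrightarrow> 0) at_bot"
    proof (rule tendsto_sandwich[OF _ _ tendsto_const BU0])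
      have ev: "\<forall>\<^sub>F x in at_bot. x < (real n - 1) * m + \<mu>P"
        using eventually_le_at_bot[of "(real n - 1) * m + \<mu>P - 1"] by (rule eventually_mono) simp
      show "\<forall>\<^sub>F x in at_bot. 0 \<le> op_norm n (Utilde m \<mu>P lam (complex_of_real x) n)"
        using ev by (rule eventually_mono) (use U_opnorm[OF m mu0 mu n] in simp)
      show "\<forall>\<^sub>F x in at_bot. op_norm n (Utilde m \<mu>P lam (complex_of_real x) n) \<le> BU x"
        using ev
      proof (rule eventually_mono)
        fix x :: real assume "x < (real n - 1) * m + \<mu>P"
        then show "op_norm n (Utilde m \<mu>P lam (complex_of_real x) n) \<le> BU x"
          using U_opnorm[OF m mu0 mu n, of "complex_of_real x" lam] by (simp add: BU_def)
      qed
    qed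
  qed
  show ?thesis using P1 P2 P3 by (intro conjI)
qed

end
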